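(* For any $s\ge 0$ and $k\in\mathbb{N}$, $$\mathbb{E}\,\big|V_G^s(k)\setminus V_{\mathfrak{C}}^s(k)\big|\le \frac{4sk^2}{n-1}.$$
   Context: Complete graph $K_n$, $V_n=\{1,\dots,n\}$, $n>2$, edges $E_n$ = unordered pairs of distinct vertices. Fix $\nu\in[0,1)$. Links $(e_i,m_i)$, $i\ge1$, are i.i.d. with $e_i$ uniform on $E_n$ and independent mark $m_i\in\{\text{cross},\text{bar}\}$, cross with probability $\nu$; $\vec\omega_s$ is the sequence of the first $s$ links. Cycles of $\vec\omega_s$ are the cycles of the configuration $\{(e_i,\tfrac{i}{s+1},m_i):i\le s\}$ on $E_n\times S^1$ ($S^1=[0,1)$ periodic), defined by: loops move along $\{v\}\times S^1$, jump across a link to the other endpoint upon meeting it, keeping direction at a cross and reversing it at a bar; a cycle is the list of vertices $v$ with $(v,0)$ on a given loop, in order of visit, with the direction of passage. The cycles partition $V_n$. $G^s$ is the graph on $V_n$ with an edge $\{i,j\}$ iff $e_r=\{i,j\}$ for some $r\le s$. $V_G^s(k)$ is the set of vertices in connected components of $G^s$ with at least $k$ vertices; $V_{\mathfrak{C}}^s(k)$ is the set of vertices belonging to cycles of $\vec\omega_s$ of length at least $k$. *)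

theory Defs
  imports "HOL-Probability.Probability"
begin

text \<open>Vertices of K_n are 1..n; an edge is a 2-element subset.
  A link is a pair (edge, mark) where the mark True means cross and False means bar.\<close>

type_synonym link = "nat set \<times> bool"

definition edges :: "nat \<Rightarrow> nat set set" where
  "edges n = {{i, j} | i j. i \<in> {1..n} \<and> j \<in> {1..n} \<and> i \<noteq> j}"

definition link_pmf :: "nat \<Rightarrow> real \<Rightarrow> link pmf" where
  "link_pmf n \<nu> = pair_pmf (pmf_of_set (edges n)) (bernoulli_pmf \<nu>)"

text \<open>The sequence of the first s i.i.d. links; the i-th link (i = 1..s) is the list entry i-1.\<close>
definition links_pmf :: "nat \<Rightarrow> real \<Rightarrow> nat \<Rightarrow> link list pmf" where
  "links_pmf n \<nu> s = replicate_pmf s (link_pmf n \<nu>)"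

definition graph_rel :: "link list \<Rightarrow> (nat \<times> nat) set" where
  "graph_rel \<omega> = {(i, j). i \<noteq> j \<and> {i, j} \<in> fst ` set \<omega>}"

definition V_G :: "nat \<Rightarrow> link list \<Rightarrow> nat \<Rightarrow> nat set" where
  "V_G n \<omega> k = {v \<in> {1..n}. k \<le> card {w \<in> {1..n}. (v, w) \<in> (graph_rel \<omega>)\<^sup>*}}"

text \<open>Loops of the configuration {(e_i, i/(s+1), m_i)} on V_n x S^1.
  The circle of vertex v is cut at the times j/(s+1), j = 1..s; the segment (v,j), j = 0..s,
  is the open arc from j/(s+1) to (j+1)/(s+1) (with (s+1)/(s+1) = 0 in S^1).
  Segment ends are glued as follows:
  at time 0 (no link there) (v,s) is glued to (v,0);
  at time j/(s+1), with link e_j = {v,w}: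
    if v is not in e_j, (v,j-1) is glued to (v,j);
    cross: (v,j-1) is glued to (w,j) (the loop jumps and keeps its direction);
    bar: (v,j-1) is glued to (w,j-1) and (v,j) to (w,j) (the loop jumps and reverses).\<close>

definition seg_adj :: "nat \<Rightarrow> link list \<Rightarrow> ((nat \<times> nat) \<times> (nat \<times> nat)) set" where
  "seg_adj n \<omega> =
     {((v, length \<omega>), (v, 0)) | v. v \<in> {1..n}}
   \<union> {((v, j - 1), (v, j)) | v j. v \<in> {1..n} \<and> j \<in> {1..length \<omega>} \<and> v \<notin> fst (\<omega> ! (j - 1))}
   \<union> {((v, j - 1), (w, j)) | v w j. j \<in> {1..length \<omega>} \<and> snd (\<omega> ! (j - 1))
          \<and> v \<noteq> w \<and> fst (\<omega> ! (j - 1)) = {v, w}}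
   \<union> {((v, j - 1), (w, j - 1)) | v w j. j \<in> {1..length \<omega>} \<and> \<not> snd (\<omega> ! (j - 1))
          \<and> v \<noteq> w \<and> fst (\<omega> ! (j - 1)) = {v, w}}
   \<union> {((v, j), (w, j)) | v w j. j \<in> {1..length \<omega>} \<and> \<not> snd (\<omega> ! (j - 1))
          \<and> v \<noteq> w \<and> fst (\<omega> ! (j - 1)) = {v, w}}"

text \<open>v and w lie on the same cycle iff (v,0) and (w,0) lie on the same loop.\<close>
definition same_loop :: "nat \<Rightarrow> link list \<Rightarrow> nat \<Rightarrow> nat \<Rightarrow> bool" where
  "same_loop n \<omega> v w \<longleftrightarrow> ((v, 0), (w, 0)) \<in> (seg_adj n \<omega> \<union> (seg_adj n \<omega>)\<inverse>)\<^sup>*"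

definition cycle_of :: "nat \<Rightarrow> link list \<Rightarrow> nat \<Rightarrow> nat set" where
  "cycle_of n \<omega> v = {w \<in> {1..n}. same_loop n \<omega> v w}"

definition V_C :: "nat \<Rightarrow> link list \<Rightarrow> nat \<Rightarrow> nat set" where
  "V_C n \<omega> k = {v \<in> {1..n}. k \<le> card (cycle_of n \<omega> v)}"

end

theory Submission
  imports Defs
begin

definition rho :: "nat \<times> bool \<Rightarrow> nat \<times> bool" where
  "rho x = (fst x, \<not> snd x)"

definition good :: "nat \<Rightarrow> (nat \<times> bool \<Rightarrow> nat \<times> bool) \<Rightarrow> bool" where
  "good n mu \<longleftrightarrow> (\<forall>x. mu (mu x) = x) \<and> (\<forall>x. mu x \<noteq> x) \<and> (\<forall>x. fst x \<notin> {1..n} \<longrightarrow> mu x = rho x)"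

definition Erel :: "(nat \<times> bool \<Rightarrow> nat \<times> bool) \<Rightarrow> ((nat \<times> bool) \<times> (nat \<times> bool)) set" where
  "Erel mu = {(x, y). y = mu x \<or> y = rho x}"

definition sig :: "(nat \<times> bool \<Rightarrow> nat \<times> bool) \<Rightarrow> nat \<times> bool \<Rightarrow> nat \<times> bool" where
  "sig mu y = mu (rho y)"

definition per :: "(nat \<times> bool \<Rightarrow> nat \<times> bool) \<Rightarrow> nat \<times> bool \<Rightarrow> nat" where
  "per mu x = (LEAST L. 0 < L \<and> (sig mu ^^ L) x = x)"

lemma sig_apply: "sig mu y = mu (rho y)" by (simp add: sig_def)

lemma rho_rho[simp]: "rho (rho x) = x" by (simp add: rho_def)
lemma rho_neq[simp]: "rho x \<noteq> x" by (cases x) (simp add: rho_def)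
lemma fst_rho[simp]: "fst (rho x) = fst x" by (simp add: rho_def)
lemma rho_inj: "rho x = rho y \<longleftrightarrow> x = y" by (metis rho_rho)

lemma goodD:
  assumes "good n mu"
  shows "mu (mu x) = x" "mu x \<noteq> x" "fst x \<notin> {1..n} \<Longrightarrow> mu x = rho x"
  using assms unfolding good_def by blast+

lemma good_mu_inj: "good n mu \<Longrightarrow> mu x = mu y \<longleftrightarrow> x = y"
  by (metis goodD(1))

lemma good_fst_mu: assumes "good n mu" "fst x \<in> {1..n}" shows "fst (mu x) \<in> {1..n}"
proof (rule ccontr)
  assume "fst (mu x) \<notin> {1..n}"
  then have "mu (mu x) = rho (mu x)" using goodD(3)[OF assms(1)] by blast
  then have "x = rho (mu x)" using goodD(1)[OF assms(1), of x] by simp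
  then have "fst x = fst (mu x)" by (metis fst_rho)
  then show False using assms(2) \<open>fst (mu x) \<notin> {1..n}\<close> by simp
qed

lemma sig_inj: "good n mu \<Longrightarrow> inj (sig mu)"
  unfolding inj_def sig_def by (auto simp: good_mu_inj rho_inj)

lemma sig_fst: "good n mu \<Longrightarrow> fst x \<in> {1..n} \<Longrightarrow> fst ((sig mu ^^ i) x) \<in> {1..n}"
proof (induction i)
  case (Suc i)
  have "(sig mu ^^ Suc i) x = sig mu ((sig mu ^^ i) x)" by simp
  also have "\<dots> = mu (rho ((sig mu ^^ i) x))" by (rule sig_apply)
  finally show ?case using good_fst_mu[of n mu "rho ((sig mu ^^ i) x)"] Suc by (metis fst_rho)
qed simp

lemma sig_period_exists:
  assumes g: "good n mu" and x: "fst x \<in> {1..n}"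
  shows "\<exists>L. 0 < L \<and> (sig mu ^^ L) x = x"
proof -
  let ?D = "{y::nat\<times>bool. fst y \<in> {1..n}}"
  have "?D = {1..n} \<times> UNIV" by auto
  hence fin: "finite ?D" by simp
  have "(\<lambda>i. (sig mu ^^ i) x) ` UNIV \<subseteq> ?D"
    using sig_fst[OF g x] by auto
  hence "finite ((\<lambda>i. (sig mu ^^ i) x) ` UNIV)" using fin finite_subset by blast
  hence "\<not> inj (\<lambda>i::nat. (sig mu ^^ i) x)" using finite_imageD by blast
  then obtain i j where ij: "i \<noteq> j" "(sig mu ^^ i) x = (sig mu ^^ j) x" unfolding inj_def by blast
  { fix i j :: nat assume "i < j" "(sig mu ^^ i) x = (sig mu ^^ j) x"
    then have "(sig mu ^^ i) x = (sig mu ^^ i) ((sig mu ^^ (j - i)) x)"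
      by (metis funpow_add o_apply le_add_diff_inverse less_imp_le)
    then have "(sig mu ^^ (j - i)) x = x"
      using inj_fn[OF sig_inj[OF g], of i] unfolding inj_def by metis
    hence "\<exists>L. 0 < L \<and> (sig mu ^^ L) x = x" using \<open>i < j\<close> by (intro exI[of _ "j - i"]) auto }
  note * = this
  show ?thesis using ij *[of i j] *[of j i] by (cases "i < j") auto
qed

lemma per_props:
  assumes g: "good n mu" and x: "fst x \<in> {1..n}"
  shows "0 < per mu x" "(sig mu ^^ per mu x) x = x"
    "\<And>j. 0 < j \<Longrightarrow> j < per mu x \<Longrightarrow> (sig mu ^^ j) x \<noteq> x"
proof -
  obtain L where L: "0 < L" "(sig mu ^^ L) x = x" using sig_period_exists[OF g x] by blast
  show "0 < per mu x" "(sig mu ^^ per mu x) x = x"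
    unfolding per_def using LeastI[of "\<lambda>L. 0 < L \<and> (sig mu ^^ L) x = x", OF conjI[OF L]] by auto
  show "\<And>j. 0 < j \<Longrightarrow> j < per mu x \<Longrightarrow> (sig mu ^^ j) x \<noteq> x"
    unfolding per_def using not_less_Least by blast
qed

lemma sig_mod:
  assumes g: "good n mu" and x: "fst x \<in> {1..n}"
  shows "(sig mu ^^ i) x = (sig mu ^^ (i mod per mu x)) x"
proof -
  have P: "(sig mu ^^ (m * per mu x)) x = x" for m
    by (induction m) (auto simp: funpow_add per_props[OF g x] simp del: funpow.simps)
  have "i = i mod per mu x + (i div per mu x) * per mu x" by (metis mod_div_mult_eq)
  hence "(sig mu ^^ i) x = (sig mu ^^ (i mod per mu x)) ((sig mu ^^ ((i div per mu x) * per mu x)) x)"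
    by (metis funpow_add o_apply)
  thus ?thesis using P by simp
qed

lemma sig_D1:
  assumes g: "good n mu" and x: "fst x \<in> {1..n}" and ij: "i < per mu x" "j < per mu x"
    and eq: "(sig mu ^^ i) x = (sig mu ^^ j) x"
  shows "i = j"
proof (rule ccontr)
  assume "i \<noteq> j"
  { fix i j :: nat assume "i < j" "j < per mu x" "(sig mu ^^ i) x = (sig mu ^^ j) x"
    then have "(sig mu ^^ i) x = (sig mu ^^ i) ((sig mu ^^ (j - i)) x)"
      by (metis funpow_add o_apply le_add_diff_inverse less_imp_le)
    then have "(sig mu ^^ (j - i)) x = x"
      using inj_fn[OF sig_inj[OF g], of i] unfolding inj_def by metis
    hence False using per_props(3)[OF g x, of "j - i"] \<open>i < j\<close> \<open>j < per mu x\<close> by auto }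
  thus False using \<open>i \<noteq> j\<close> ij eq by (metis linorder_neqE_nat)
qed

definition tau :: "(nat \<times> bool \<Rightarrow> nat \<times> bool) \<Rightarrow> nat \<times> bool \<Rightarrow> nat \<times> bool" where
  "tau mu = rho \<circ> mu"

lemma rho_sig_pow: "good n mu \<Longrightarrow> rho ((sig mu ^^ m) y) = (tau mu ^^ m) (rho y)"
  by (induction m) (auto simp: sig_def tau_def goodD)

lemma tau_sig_pow: "good n mu \<Longrightarrow> t \<le> j \<Longrightarrow> (tau mu ^^ t) ((sig mu ^^ j) y) = (sig mu ^^ (j - t)) y"
proof (induction t arbitrary: j)
  case 0 then show ?case by simp
next
  case (Suc t)
  then obtain j' where j': "j = Suc j'" by (cases j) auto
  have "(tau mu ^^ Suc t) ((sig mu ^^ j) y) = (tau mu ^^ t) (tau mu ((sig mu ^^ j) y))"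
    by (simp add: funpow_Suc_right del: funpow.simps)
  also have "tau mu ((sig mu ^^ j) y) = (sig mu ^^ j') y"
    using j' Suc.prems by (simp add: tau_def sig_apply goodD)
  finally show ?case using Suc j' by simp
qed

lemma sig_D2:
  assumes g: "good n mu" and x: "fst x \<in> {1..n}"
  shows "rho ((sig mu ^^ i) x) \<noteq> (sig mu ^^ j) x"
proof
  assume eq0: "rho ((sig mu ^^ i) x) = (sig mu ^^ j) x"
  define j' where "j' = j + i * per mu x"
  have "(sig mu ^^ j') x = (sig mu ^^ j) x"
    using sig_mod[OF g x, of j'] sig_mod[OF g x, of j] by (simp add: j'_def)
  with eq0 have eq: "rho ((sig mu ^^ i) x) = (sig mu ^^ j') x" by simp
  have "i * 1 \<le> i * per mu x" using per_props(1)[OF g x] by (intro mult_le_mono2) auto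
  hence ij: "i \<le> j'" unfolding j'_def by linarith
  have key: "rho ((sig mu ^^ (i + t)) x) = (sig mu ^^ (j' - t)) x" if "t \<le> j'" for t
  proof -
    have "rho ((sig mu ^^ (i + t)) x) = rho ((sig mu ^^ t) ((sig mu ^^ i) x))"
      by (metis funpow_add o_apply add.commute)
    also have "\<dots> = (tau mu ^^ t) (rho ((sig mu ^^ i) x))" using rho_sig_pow[OF g] by blast
    also have "\<dots> = (sig mu ^^ (j' - t)) x" using eq tau_sig_pow[OF g that] by simp
    finally show ?thesis .
  qed
  show False
  proof (cases "even (j' - i)")
    case True
    obtain t where d: "j' - i = 2 * t" using True by (rule evenE)
    have "i + t = j' - t" "t \<le> j'" using d ij by auto
    then show False using key[of t] rho_neq by metis
  next
    case False
    obtain t where d: "j' - i = 2 * t + 1" using False by (rule oddE)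
    have "j' - t = Suc (i + t)" "t \<le> j'" using d ij by auto
    then have "rho ((sig mu ^^ (i + t)) x) = mu (rho ((sig mu ^^ (i + t)) x))"
      using key[of t] by (simp add: sig_apply)
    then show False using goodD(2)[OF g] by metis
  qed
qed

lemma Erel_iff: "(x, y) \<in> Erel mu \<longleftrightarrow> y = mu x \<or> y = rho x"
  by (auto simp: Erel_def)

lemma Erel_sym: "good n mu \<Longrightarrow> (x, y) \<in> Erel mu \<Longrightarrow> (y, x) \<in> Erel mu"
  by (auto simp: Erel_iff goodD)

lemma Erel_rtrancl_sym: "good n mu \<Longrightarrow> (x, y) \<in> (Erel mu)\<^sup>* \<Longrightarrow> (y, x) \<in> (Erel mu)\<^sup>*"
proof -
  assume g: "good n mu" and xy: "(x, y) \<in> (Erel mu)\<^sup>*"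
  have "sym (Erel mu)" using Erel_sym[OF g] by (auto intro: symI)
  then have "sym ((Erel mu)\<^sup>*)" by (rule sym_rtrancl)
  then show ?thesis using xy by (auto dest: symD)
qed

lemma Erel_rho: "(x, rho x) \<in> (Erel mu)\<^sup>*" "(rho x, x) \<in> (Erel mu)\<^sup>*"
proof -
  show "(x, rho x) \<in> (Erel mu)\<^sup>*" by (rule r_into_rtrancl) (simp add: Erel_iff)
  show "(rho x, x) \<in> (Erel mu)\<^sup>*" by (rule r_into_rtrancl) (simp add: Erel_iff)
qed

lemma Erel_mu: "(x, mu x) \<in> (Erel mu)\<^sup>*"
  by (rule r_into_rtrancl) (simp add: Erel_iff)

lemma end_True: "((fst y, True), y) \<in> (Erel mu)\<^sup>*" "(y, (fst y, True)) \<in> (Erel mu)\<^sup>*"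
proof -
  have "y = (fst y, True) \<or> y = rho (fst y, True)" by (cases y) (auto simp: rho_def)
  then show "((fst y, True), y) \<in> (Erel mu)\<^sup>*" "(y, (fst y, True)) \<in> (Erel mu)\<^sup>*"
    using Erel_rho[of "(fst y, True)" mu] by auto
qed

lemma end_conn: "(y, z) \<in> (Erel mu)\<^sup>* \<Longrightarrow> ((fst y, True), (fst z, True)) \<in> (Erel mu)\<^sup>*"
  using end_True[of y mu] end_True[of z mu] by (meson rtrancl_trans)

lemma sig_Suc: "(sig mu ^^ Suc i) x = mu (rho ((sig mu ^^ i) x))"
  by (simp add: sig_def)

lemma mu_sig_Suc: "good n mu \<Longrightarrow> mu ((sig mu ^^ Suc i) x) = rho ((sig mu ^^ i) x)"
  by (simp add: sig_def goodD)

lemma mu_rho_sig: "mu (rho ((sig mu ^^ i) x)) = (sig mu ^^ Suc i) x"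
  by (rule sig_Suc[symmetric])

lemma mu_start:
  assumes g: "good n mu" and x: "fst x \<in> {1..n}"
  shows "mu x = rho ((sig mu ^^ (per mu x - 1)) x)"
proof -
  have "Suc (per mu x - 1) = per mu x" using per_props(1)[OF g x] by simp
  then have "x = mu (rho ((sig mu ^^ (per mu x - 1)) x))"
    using per_props(2)[OF g x] sig_Suc[where mu=mu and i="per mu x - 1" and x=x] by simp
  then show ?thesis using goodD(1)[OF g] by metis
qed

lemma K_char:
  assumes g: "good n mu" and x: "fst x \<in> {1..n}"
  shows "(x, y) \<in> (Erel mu)\<^sup>* \<longleftrightarrow> (\<exists>i < per mu x. y = (sig mu ^^ i) x \<or> y = rho ((sig mu ^^ i) x))"
proof
  assume "(x, y) \<in> (Erel mu)\<^sup>*"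
  then show "\<exists>i < per mu x. y = (sig mu ^^ i) x \<or> y = rho ((sig mu ^^ i) x)"
  proof (induction rule: rtrancl_induct)
    case base
    then show ?case using per_props(1)[OF g x] by (intro exI[of _ 0]) auto
  next
    case (step y z)
    from step.IH obtain i where i: "i < per mu x" "y = (sig mu ^^ i) x \<or> y = rho ((sig mu ^^ i) x)" by blast
    from step.hyps(2) have z: "z = mu y \<or> z = rho y" by (simp add: Erel_iff)
    show ?case
    proof (cases "y = (sig mu ^^ i) x")
      case yT: True
      show ?thesis
      proof (cases "z = rho y")
        case True then show ?thesis using i(1) yT by (intro exI[of _ i]) simp
      next
        case False
        then have zz: "z = mu ((sig mu ^^ i) x)" using z yT by simp
        show ?thesis
        proof (cases i)
          case 0
          then have "z = rho ((sig mu ^^ (per mu x - 1)) x)" using zz mu_start[OF g x] by simp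
          then show ?thesis using per_props(1)[OF g x] by (intro exI[of _ "per mu x - 1"]) simp
        next
          case (Suc i')
          then have "z = rho ((sig mu ^^ i') x)" using zz mu_sig_Suc[OF g, where i=i' and x=x] by simp
          then show ?thesis using i(1) Suc by (intro exI[of _ i']) simp
        qed
      qed
    next
      case False
      then have y: "y = rho ((sig mu ^^ i) x)" using i by blast
      show ?thesis
      proof (cases "z = rho y")
        case True then show ?thesis using i(1) y by (intro exI[of _ i]) simp
      next
        case False
        then have zz: "z = (sig mu ^^ Suc i) x" using z y mu_rho_sig[where mu=mu and i=i and x=x] by simp
        show ?thesis
        proof (cases "Suc i < per mu x")
          case True then show ?thesis using zz by (intro exI[of _ "Suc i"]) simp
        next
          case False
          then have "Suc i = per mu x" using i(1) by simp
          then have "z = x" using zz per_props(2)[OF g x] by simp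
          then show ?thesis using per_props(1)[OF g x] by (intro exI[of _ 0]) simp
        qed
      qed
    qed
  qed
next
  assume "\<exists>i < per mu x. y = (sig mu ^^ i) x \<or> y = rho ((sig mu ^^ i) x)"
  then obtain i where "y = (sig mu ^^ i) x \<or> y = rho ((sig mu ^^ i) x)" by blast
  moreover have "(x, (sig mu ^^ i) x) \<in> (Erel mu)\<^sup>*" for i
  proof (induction i)
    case (Suc i)
    have "((sig mu ^^ i) x, rho ((sig mu ^^ i) x)) \<in> (Erel mu)\<^sup>*" by (rule Erel_rho)
    moreover have "(rho ((sig mu ^^ i) x), (sig mu ^^ Suc i) x) \<in> (Erel mu)\<^sup>*"
      unfolding sig_Suc by (rule Erel_mu)
    ultimately show ?case using Suc by (blast intro: rtrancl_trans)
  qed simp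
  ultimately show "(x, y) \<in> (Erel mu)\<^sup>*"
  proof (elim disjE)
    assume "y = (sig mu ^^ i) x" then show ?thesis using \<open>\<And>i. (x, (sig mu ^^ i) x) \<in> (Erel mu)\<^sup>*\<close> by simp
  next
    assume "y = rho ((sig mu ^^ i) x)"
    then show ?thesis using rtrancl_trans[OF \<open>\<And>i. (x, (sig mu ^^ i) x) \<in> (Erel mu)\<^sup>*\<close> Erel_rho(1)] by simp
  qed
qed

definition cyc :: "(nat \<times> bool \<Rightarrow> nat \<times> bool) \<Rightarrow> nat \<Rightarrow> nat \<Rightarrow> nat set" where
  "cyc mu n v = {w \<in> {1..n}. ((v, True), (w, True)) \<in> (Erel mu)\<^sup>*}"

lemma fst_eq_cases: "fst y = fst z \<Longrightarrow> z = y \<or> z = rho y"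
  by (cases y; cases z) (auto simp: rho_def)

lemma pt_eq: "((w, True) = y \<or> (w, True) = rho y) \<longleftrightarrow> fst y = w"
  by (cases y) (auto simp: rho_def)

lemma cyc_char:
  assumes g: "good n mu" and v: "v \<in> {1..n}"
  shows "w \<in> cyc mu n v \<longleftrightarrow> w \<in> {1..n} \<and> (\<exists>i < per mu (v, False). fst ((sig mu ^^ i) (v, False)) = w)"
proof -
  have "((v, True), (w, True)) \<in> (Erel mu)\<^sup>* \<longleftrightarrow> ((v, False), (w, True)) \<in> (Erel mu)\<^sup>*"
  proof -
    have 1: "((v, True), (v, False)) \<in> (Erel mu)\<^sup>*" "((v, False), (v, True)) \<in> (Erel mu)\<^sup>*"
      using Erel_rho[of "(v,False)" mu] by (simp_all add: rho_def)
    show ?thesis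
    proof
      assume "((v, True), (w, True)) \<in> (Erel mu)\<^sup>*"
      then show "((v, False), (w, True)) \<in> (Erel mu)\<^sup>*" using 1(2) by (rule rtrancl_trans[rotated])
    next
      assume "((v, False), (w, True)) \<in> (Erel mu)\<^sup>*"
      then show "((v, True), (w, True)) \<in> (Erel mu)\<^sup>*" using 1(1) by (rule rtrancl_trans[rotated])
    qed
  qed
  also have "\<dots> \<longleftrightarrow> (\<exists>i < per mu (v, False). fst ((sig mu ^^ i) (v, False)) = w)"
    unfolding K_char[OF g, of "(v,False)", unfolded fst_conv, OF v]
    by (simp add: pt_eq)
  finally show ?thesis unfolding cyc_def by blast
qed

lemma cyc_self: "v \<in> {1..n} \<Longrightarrow> v \<in> cyc mu n v"
  by (simp add: cyc_def)

lemma cyc_sub: "cyc mu n v \<subseteq> {1..n}" unfolding cyc_def by (rule subsetI) simp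

lemma cyc_fin: "finite (cyc mu n v)" by (rule finite_subset[OF cyc_sub]) simp

lemma cyc_trans: assumes g: "good n mu" and w: "w \<in> cyc mu n v" shows "cyc mu n w = cyc mu n v"
proof -
  have 1: "((v, True), (w, True)) \<in> (Erel mu)\<^sup>*" using w by (simp add: cyc_def)
  have 2: "((w, True), (v, True)) \<in> (Erel mu)\<^sup>*" using Erel_rtrancl_sym[OF g 1] .
  show ?thesis
  proof (rule set_eqI)
    fix z
    have "((w, True), (z, True)) \<in> (Erel mu)\<^sup>* \<longleftrightarrow> ((v, True), (z, True)) \<in> (Erel mu)\<^sup>*"
    proof
      assume "((w, True), (z, True)) \<in> (Erel mu)\<^sup>*" then show "((v, True), (z, True)) \<in> (Erel mu)\<^sup>*"
        using 1 by (rule rtrancl_trans[rotated])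
    next
      assume "((v, True), (z, True)) \<in> (Erel mu)\<^sup>*" then show "((w, True), (z, True)) \<in> (Erel mu)\<^sup>*"
        using 2 by (rule rtrancl_trans[rotated])
    qed
    then show "z \<in> cyc mu n w \<longleftrightarrow> z \<in> cyc mu n v" by (simp add: cyc_def)
  qed
qed

lemma cyc_conn: "(y, z) \<in> (Erel mu)\<^sup>* \<Longrightarrow> fst z \<in> {1..n} \<Longrightarrow> fst z \<in> cyc mu n (fst y)"
  unfolding cyc_def using end_conn[of y z mu] by simp

lemma sig_fst_inj:
  assumes g: "good n mu" and x: "fst x \<in> {1..n}" and ij: "i < per mu x" "j < per mu x"
    and eq: "fst ((sig mu ^^ i) x) = fst ((sig mu ^^ j) x)"
  shows "i = j"
proof -
  have "(sig mu ^^ j) x \<noteq> rho ((sig mu ^^ i) x)" using sig_D2[OF g x, of i j] by auto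
  then have "(sig mu ^^ j) x = (sig mu ^^ i) x" using fst_eq_cases[OF eq] by blast
  then show ?thesis using sig_D1[OF g x ij] by simp
qed

lemma card_sig_range:
  assumes g: "good n mu" and x: "fst x \<in> {1..n}" and j: "j \<le> per mu x"
  shows "card ((\<lambda>q. fst ((sig mu ^^ q) x)) ` {i..<j}) = j - i"
proof -
  have "inj_on (\<lambda>q. fst ((sig mu ^^ q) x)) {i..<j}"
  proof (rule inj_onI)
    fix p q assume "p \<in> {i..<j}" "q \<in> {i..<j}" "fst ((sig mu ^^ p) x) = fst ((sig mu ^^ q) x)"
    moreover have "p < per mu x" "q < per mu x" using j \<open>p \<in> {i..<j}\<close> \<open>q \<in> {i..<j}\<close> by auto
    ultimately show "p = q" using sig_fst_inj[OF g x] by blast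
  qed
  then show ?thesis by (simp add: card_image)
qed

definition tr :: "'a \<Rightarrow> 'a \<Rightarrow> 'a \<Rightarrow> 'a" where
  "tr a b x = (if x = a then b else if x = b then a else x)"

definition upd :: "nat \<Rightarrow> nat \<Rightarrow> bool \<Rightarrow> (nat \<times> bool \<Rightarrow> nat \<times> bool) \<Rightarrow> nat \<times> bool \<Rightarrow> nat \<times> bool" where
  "upd a b m mu x = (if m then tr (a, False) (b, False) (mu (tr (a, False) (b, False) x))
     else (if x = (a, False) then (b, False) else if x = (b, False) then (a, False)
       else if x = mu (a, False) then mu (b, False) else if x = mu (b, False) then mu (a, False) else mu x))"

lemma upd_sym: "upd a b m mu = upd b a m mu"
  by (rule ext) (auto simp: upd_def tr_def)

lemma upd_other:
  assumes "x \<noteq> (a, False)" "x \<noteq> (b, False)" "x \<noteq> mu (a, False)" "x \<noteq> mu (b, False)" "good n mu"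
  shows "upd a b m mu x = mu x"
  using assms by (auto simp: upd_def tr_def) (metis goodD(1))+

lemma tr_tr[simp]: "tr a b (tr a b x) = x" by (auto simp: tr_def)

lemma tr_out: "fst y \<notin> {1..n} \<Longrightarrow> a \<in> {1..n} \<Longrightarrow> b \<in> {1..n} \<Longrightarrow> tr (a, False) (b, False) y = y"
  by (cases y) (auto simp: tr_def)

lemma upd_cross: "upd a b True mu x = tr (a, False) (b, False) (mu (tr (a, False) (b, False) x))"
  by (simp add: upd_def)

lemma upd_good:
  assumes g: "good n mu" and ab: "a \<noteq> b" "a \<in> {1..n}" "b \<in> {1..n}"
  shows "good n (upd a b m mu)"
proof -
  note G = goodD[OF g]
  define A where "A = (a, False)"
  define B where "B = (b, False)"
  have AB: "A \<noteq> B" using ab by (simp add: A_def B_def)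
  have fA: "fst (mu A) \<in> {1..n}" "fst (mu B) \<in> {1..n}" "fst A \<in> {1..n}" "fst B \<in> {1..n}"
    using good_fst_mu[OF g] ab by (auto simp: A_def B_def)
  have minj: "mu x = mu y \<longleftrightarrow> x = y" for x y using good_mu_inj[OF g] by blast
  show ?thesis
  proof (cases m)
    case True
    have inv: "upd a b m mu (upd a b m mu x) = x" for x
      using True by (simp add: upd_cross G(1))
    have nf: "upd a b m mu x \<noteq> x" for x
      using True G(2)[of "tr (a, False) (b, False) x"] by (simp add: upd_cross) (metis tr_tr)
    have out: "upd a b m mu x = rho x" if "fst x \<notin> {1..n}" for x
    proof -
      have "tr (a, False) (b, False) x = x" using tr_out that ab by blast
      moreover have "tr (a, False) (b, False) (rho x) = rho x" using tr_out[of "rho x"] that ab by simp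
      ultimately show ?thesis using True G(3)[OF that] by (simp add: upd_cross)
    qed
    show ?thesis unfolding good_def using inv nf out by blast
  next
    case False
    have f: "upd a b m mu x = (if x = A then B else if x = B then A
       else if x = mu A then mu B else if x = mu B then mu A else mu x)" for x
      using False by (simp add: upd_def A_def B_def)
    have muAB: "mu A \<noteq> A" "mu B \<noteq> B" "mu A \<noteq> mu B" using G(2) minj AB by auto
    have inv: "upd a b m mu (upd a b m mu x) = x" for x
    proof -
      consider "x = A" | "x = B" | "x \<noteq> A" "x \<noteq> B" "x = mu A" | "x \<noteq> A" "x \<noteq> B" "x \<noteq> mu A" "x = mu B"
        | "x \<noteq> A" "x \<noteq> B" "x \<noteq> mu A" "x \<noteq> mu B" by blast
      then show ?thesis
      proof cases
        case 1 then show ?thesis using AB by (simp add: f)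
      next
        case 2 then show ?thesis using AB by (simp add: f)
      next
        case 3
        have "mu B \<noteq> A" using 3 G(1) by metis
        then show ?thesis using 3 muAB by (simp add: f)
      next
        case 4
        have "mu A \<noteq> B" using 4 G(1) by metis
        then show ?thesis using 4 muAB by (simp add: f)
      next
        case 5
        have "mu x \<noteq> A" "mu x \<noteq> B" "mu x \<noteq> mu A" "mu x \<noteq> mu B" using 5 G(1) minj by metis+
        then show ?thesis using 5 by (simp add: f G(1))
      qed
    qed
    have nf: "upd a b m mu x \<noteq> x" for x
      using AB muAB G(2)[of x] by (simp add: f)
    have out: "upd a b m mu x = rho x" if "fst x \<notin> {1..n}" for x
    proof -
      have "x \<noteq> A" "x \<noteq> B" "x \<noteq> mu A" "x \<noteq> mu B" using that fA by auto
      then show ?thesis using G(3)[OF that] by (simp add: f)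
    qed
    show ?thesis unfolding good_def using inv nf out by blast
  qed
qed

lemma Erel_step_mu: "(y, mu y) \<in> Erel mu" by (simp add: Erel_iff)
lemma Erel_step_rho: "(y, rho y) \<in> Erel mu" by (simp add: Erel_iff)

lemma path_lemma:
  assumes hyp: "\<And>q. i \<le> q \<Longrightarrow> q < j \<Longrightarrow> mu' (rho ((sig mu ^^ q) x)) = mu (rho ((sig mu ^^ q) x))"
    and ij: "i \<le> j"
  shows "((sig mu ^^ i) x, (sig mu ^^ j) x) \<in> (Erel mu')\<^sup>*"
  using ij hyp
proof (induction j)
  case 0 then show ?case by simp
next
  case (Suc j)
  show ?case
  proof (cases "i = Suc j")
    case True then show ?thesis by simp
  next
    case False
    then have ij: "i \<le> j" using Suc.prems by simp
    have IH: "((sig mu ^^ i) x, (sig mu ^^ j) x) \<in> (Erel mu')\<^sup>*" using Suc.IH[OF ij] Suc.prems by simp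
    have e1: "((sig mu ^^ j) x, rho ((sig mu ^^ j) x)) \<in> Erel mu'" by (rule Erel_step_rho)
    have e2: "(rho ((sig mu ^^ j) x), mu' (rho ((sig mu ^^ j) x))) \<in> Erel mu'" by (rule Erel_step_mu)
    have "mu' (rho ((sig mu ^^ j) x)) = (sig mu ^^ Suc j) x"
      using Suc.prems(2)[of j] ij by (simp add: mu_rho_sig)
    with e2 have e2': "(rho ((sig mu ^^ j) x), (sig mu ^^ Suc j) x) \<in> Erel mu'" by simp
    show ?thesis using rtrancl_into_rtrancl[OF rtrancl_into_rtrancl[OF IH e1] e2'] .
  qed
qed

lemma K_same:
  assumes g: "good n mu" and hyp: "\<And>y. (x, y) \<in> (Erel mu)\<^sup>* \<Longrightarrow> y \<noteq> (a, False) \<and> y \<noteq> (b, False)"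
  shows "(x, z) \<in> (Erel (upd a b m mu))\<^sup>* \<longleftrightarrow> (x, z) \<in> (Erel mu)\<^sup>*"
proof -
  have agree: "upd a b m mu y = mu y" if y: "(x, y) \<in> (Erel mu)\<^sup>*" for y
  proof (rule upd_other[OF _ _ _ _ g])
    show "y \<noteq> (a, False)" "y \<noteq> (b, False)" using hyp[OF y] by auto
    have my: "(x, mu y) \<in> (Erel mu)\<^sup>*" using rtrancl_into_rtrancl[OF y Erel_step_mu] .
    show "y \<noteq> mu (a, False)"
    proof
      assume "y = mu (a, False)" then have "mu y = (a, False)" using goodD(1)[OF g] by simp
      then show False using hyp[OF my] by simp
    qed
    show "y \<noteq> mu (b, False)"
    proof
      assume "y = mu (b, False)" then have "mu y = (b, False)" using goodD(1)[OF g] by simp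
      then show False using hyp[OF my] by simp
    qed
  qed
  show ?thesis
  proof
    assume "(x, z) \<in> (Erel (upd a b m mu))\<^sup>*"
    then show "(x, z) \<in> (Erel mu)\<^sup>*"
    proof (induction rule: rtrancl_induct)
      case (step y z)
      have "z = upd a b m mu y \<or> z = rho y" using step.hyps(2) by (simp add: Erel_iff)
      then have "(y, z) \<in> Erel mu" using agree[OF step.IH] by (auto simp: Erel_iff)
      then show ?case by (rule rtrancl_into_rtrancl[OF step.IH])
    qed simp
  next
    assume "(x, z) \<in> (Erel mu)\<^sup>*"
    then show "(x, z) \<in> (Erel (upd a b m mu))\<^sup>*"
    proof (induction rule: rtrancl_induct)
      case (step y z)
      have "z = mu y \<or> z = rho y" using step.hyps(2) by (simp add: Erel_iff)
      then have "(y, z) \<in> Erel (upd a b m mu)" using agree[OF step.hyps(1)] by (auto simp: Erel_iff)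
      then show ?case by (rule rtrancl_into_rtrancl[OF step.IH])
    qed simp
  qed
qed

lemma cyc_unchanged:
  assumes g: "good n mu" and v: "v \<in> {1..n}" and na: "a \<notin> cyc mu n v" and nb: "b \<notin> cyc mu n v"
    and ab: "a \<in> {1..n}" "b \<in> {1..n}"
  shows "cyc (upd a b m mu) n v = cyc mu n v"
proof -
  have hyp: "y \<noteq> (a, False) \<and> y \<noteq> (b, False)" if "((v, True), y) \<in> (Erel mu)\<^sup>*" for y
  proof -
    have "fst y \<notin> {1..n} \<or> fst y \<in> cyc mu n v" using cyc_conn[OF that] by auto
    then show ?thesis using na nb ab by auto
  qed
  show ?thesis unfolding cyc_def using K_same[OF g hyp] by simp
qed

lemma rho_sig_neq_A:
  assumes g: "good n mu" and x: "fst x \<in> {1..n}"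
  shows "rho ((sig mu ^^ q) x) \<noteq> x"
  using sig_D2[OF g x, of q 0] by simp

lemma rho_sig_neq_muA:
  assumes g: "good n mu" and x: "fst x \<in> {1..n}" and q: "q < per mu x - 1"
  shows "rho ((sig mu ^^ q) x) \<noteq> mu x"
proof
  assume "rho ((sig mu ^^ q) x) = mu x"
  then have "rho ((sig mu ^^ q) x) = rho ((sig mu ^^ (per mu x - 1)) x)" using mu_start[OF g x] by simp
  then have "(sig mu ^^ q) x = (sig mu ^^ (per mu x - 1)) x" by (simp add: rho_inj)
  then have "q = per mu x - 1" using sig_D1[OF g x] q by (metis diff_less less_trans per_props(1)[OF g x] zero_less_one)
  then show False using q by simp
qed

lemma merge_side:
  assumes g: "good n mu" and ab: "a \<noteq> b" "a \<in> {1..n}" "b \<in> {1..n}" and nb: "b \<notin> cyc mu n a"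
    and q: "q < per mu (a, False)"
  shows "((a, False), (sig mu ^^ q) (a, False)) \<in> (Erel (upd a b m mu))\<^sup>*"
proof -
  let ?A = "(a, False)" and ?B = "(b, False)"
  have A: "fst ?A \<in> {1..n}" using ab by simp
  have notK: "((a, False), y) \<notin> (Erel mu)\<^sup>*" if "fst y = b" for y
  proof
    assume "((a, False), y) \<in> (Erel mu)\<^sup>*"
    then have "fst y \<in> cyc mu n (fst ?A)" by (rule cyc_conn) (use that ab in simp)
    then show False using nb that by simp
  qed
  have cond: "upd a b m mu (rho ((sig mu ^^ q') ?A)) = mu (rho ((sig mu ^^ q') ?A))" if "q' < q" for q'
  proof (rule upd_other[OF _ _ _ _ g])
    have inK: "(?A, rho ((sig mu ^^ q') ?A)) \<in> (Erel mu)\<^sup>*"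
      using K_char[OF g A] q that by (metis less_trans)
    show "rho ((sig mu ^^ q') ?A) \<noteq> ?A" by (rule rho_sig_neq_A[OF g A])
    show "rho ((sig mu ^^ q') ?A) \<noteq> mu ?A" using rho_sig_neq_muA[OF g A] that q by simp
    show "rho ((sig mu ^^ q') ?A) \<noteq> ?B" using inK notK[of ?B] by auto
    show "rho ((sig mu ^^ q') ?A) \<noteq> mu ?B"
    proof
      assume "rho ((sig mu ^^ q') ?A) = mu ?B"
      then have "mu (rho ((sig mu ^^ q') ?A)) = ?B" using goodD(1)[OF g] by simp
      then have "(sig mu ^^ Suc q') ?A = ?B" by (simp add: mu_rho_sig)
      moreover have "(?A, (sig mu ^^ Suc q') ?A) \<in> (Erel mu)\<^sup>*"
        using rtrancl_into_rtrancl[OF inK Erel_step_mu] by (simp add: mu_rho_sig)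
      ultimately show False using notK[of ?B] by simp
    qed
  qed
  show ?thesis using path_lemma[of 0 q "upd a b m mu" mu ?A] cond by simp
qed

lemma merge_case:
  assumes g: "good n mu" and ab: "a \<noteq> b" "a \<in> {1..n}" "b \<in> {1..n}" and nb: "b \<notin> cyc mu n a"
    and x: "x \<in> cyc mu n a \<union> cyc mu n b"
  shows "x \<in> cyc (upd a b m mu) n a"
proof -
  let ?A = "(a, False)" and ?B = "(b, False)" and ?m = "upd a b m mu"
  have g': "good n ?m" using upd_good[OF g ab] .
  have A: "fst ?A \<in> {1..n}" and B: "fst ?B \<in> {1..n}" using ab by auto
  have na: "a \<notin> cyc mu n b" using nb cyc_trans[OF g] cyc_self ab by metis
  have sideA: "(?A, (sig mu ^^ q) ?A) \<in> (Erel ?m)\<^sup>*" if "q < per mu ?A" for q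
    using merge_side[OF g ab nb that] .
  have sideB: "(?B, (sig mu ^^ q) ?B) \<in> (Erel ?m)\<^sup>*" if "q < per mu ?B" for q
    using merge_side[OF g ab(1)[symmetric] ab(3) ab(2) na that] by (simp add: upd_sym)
  have muB: "(?B, mu ?B) \<in> (Erel ?m)\<^sup>*"
  proof -
    have "(?B, (sig mu ^^ (per mu ?B - 1)) ?B) \<in> (Erel ?m)\<^sup>*"
      using sideB per_props(1)[OF g B] by simp
    then show ?thesis using rtrancl_into_rtrancl[OF _ Erel_step_rho] mu_start[OF g B] by metis
  qed
  have AB: "(?A, ?B) \<in> (Erel ?m)\<^sup>*"
  proof (cases m)
    case False
    then have "?m ?A = ?B" by (simp add: upd_def)
    then show ?thesis using Erel_step_mu[of ?A ?m] by (metis r_into_rtrancl)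
  next
    case True
    have "mu ?B \<noteq> ?A"
    proof
      assume "mu ?B = ?A"
      then have "(?B, ?A) \<in> (Erel mu)\<^sup>*" using Erel_mu[of ?B mu] by simp
      then have "a \<in> cyc mu n b" using cyc_conn[of ?B ?A] ab by simp
      then show False using na by simp
    qed
    moreover have "mu ?B \<noteq> ?B" using goodD(2)[OF g] .
    ultimately have "?m ?A = mu ?B" using True ab by (simp add: upd_def tr_def)
    then have "(?A, mu ?B) \<in> Erel ?m" using Erel_step_mu[of ?A ?m] by simp
    then have "(mu ?B, ?A) \<in> Erel ?m" using Erel_sym[OF g'] by blast
    then show ?thesis using Erel_rtrancl_sym[OF g' rtrancl_into_rtrancl[OF muB]] by blast
  qed
  from x show ?thesis
  proof
    assume "x \<in> cyc mu n a"
    then obtain q where q: "q < per mu ?A" "fst ((sig mu ^^ q) ?A) = x" and xn: "x \<in> {1..n}"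
      using cyc_char[OF g ab(2)] by blast
    show ?thesis using cyc_conn[OF sideA[OF q(1)]] q xn by simp
  next
    assume "x \<in> cyc mu n b"
    then obtain q where q: "q < per mu ?B" "fst ((sig mu ^^ q) ?B) = x" and xn: "x \<in> {1..n}"
      using cyc_char[OF g ab(3)] by blast
    show ?thesis using cyc_conn[OF rtrancl_trans[OF AB sideB[OF q(1)]]] q xn by simp
  qed
qed

definition bad :: "(nat \<times> bool \<Rightarrow> nat \<times> bool) \<Rightarrow> nat \<Rightarrow> nat \<Rightarrow> nat \<Rightarrow> bool" where
  "bad mu k a b \<longleftrightarrow> (\<exists>i. 0 < i \<and> i < per mu (a, False) \<and> fst ((sig mu ^^ i) (a, False)) = b
      \<and> (i < k \<or> per mu (a, False) \<le> i + k))"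

lemma same_case:
  assumes g: "good n mu" and ab: "a \<noteq> b" "a \<in> {1..n}" "b \<in> {1..n}" and yb: "b \<in> cyc mu n a"
  shows "\<exists>a2 \<in> {1..n}. \<forall>x \<in> cyc mu n a. cyc (upd a b m mu) n x = cyc (upd a b m mu) n a
            \<or> cyc (upd a b m mu) n x = cyc (upd a b m mu) n a2"
    and "\<not> bad mu k a b \<Longrightarrow> \<forall>x \<in> cyc mu n a. k \<le> card (cyc (upd a b m mu) n x)"
proof -
  let ?A = "(a, False)" and ?B = "(b, False)" and ?m = "upd a b m mu"
  define L where "L = per mu ?A"
  have g': "good n ?m" using upd_good[OF g ab] .
  have A: "fst ?A \<in> {1..n}" using ab by auto
  have L0: "0 < L" using per_props(1)[OF g A] by (simp add: L_def)
  obtain p where p: "p < L" "fst ((sig mu ^^ p) ?A) = b"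
    using cyc_char[OF g ab(2)] yb by (auto simp: L_def)
  have p0: "p \<noteq> 0"
  proof
    assume "p = 0" then show False using p(2) ab(1) by simp
  qed
  have Bcases: "?B = (sig mu ^^ p) ?A \<or> ?B = rho ((sig mu ^^ p) ?A)"
    using fst_eq_cases[of "(sig mu ^^ p) ?A" ?B] p by simp
  define p1 where "p1 = (if ?B = (sig mu ^^ p) ?A then p else Suc p)"
  have p1L: "p1 \<le> L" using p by (auto simp: p1_def)
  have D1: "(sig mu ^^ i) ?A = (sig mu ^^ j) ?A \<Longrightarrow> i < L \<Longrightarrow> j < L \<Longrightarrow> i = j" for i j
    using sig_D1[OF g A] by (simp add: L_def)
  have cond: "?m (rho ((sig mu ^^ q) ?A)) = mu (rho ((sig mu ^^ q) ?A))"
    if q: "q < L - 1" "q < p1 - 1 \<or> p1 \<le> q" for q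
  proof (rule upd_other[OF _ _ _ _ g])
    show "rho ((sig mu ^^ q) ?A) \<noteq> ?A" by (rule rho_sig_neq_A[OF g A])
    show "rho ((sig mu ^^ q) ?A) \<noteq> mu ?A" using rho_sig_neq_muA[OF g A] q by (simp add: L_def)
    show "rho ((sig mu ^^ q) ?A) \<noteq> ?B"
    proof (cases "?B = (sig mu ^^ p) ?A")
      case True then show ?thesis using sig_D2[OF g A] by metis
    next
      case False
      then have B: "?B = rho ((sig mu ^^ p) ?A)" using Bcases by blast
      have "q \<noteq> p" using q False by (auto simp: p1_def)
      show ?thesis
      proof
        assume "rho ((sig mu ^^ q) ?A) = ?B"
        then have "rho ((sig mu ^^ q) ?A) = rho ((sig mu ^^ p) ?A)" using B by simp
        then have "(sig mu ^^ q) ?A = (sig mu ^^ p) ?A" by (simp add: rho_inj)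
        moreover have "q < L" using q by simp
        ultimately have "q = p" using D1 p by blast
        then show False using \<open>q \<noteq> p\<close> by simp
      qed
    qed
    show "rho ((sig mu ^^ q) ?A) \<noteq> mu ?B"
    proof (cases "?B = (sig mu ^^ p) ?A")
      case True
      then obtain p' where p': "p = Suc p'" using p0 by (cases p) auto
      have muB: "mu ?B = rho ((sig mu ^^ p') ?A)" using True p' mu_sig_Suc[OF g] by metis
      have "q \<noteq> p'" using q True p' by (auto simp: p1_def)
      show ?thesis
      proof
        assume "rho ((sig mu ^^ q) ?A) = mu ?B"
        then have "rho ((sig mu ^^ q) ?A) = rho ((sig mu ^^ p') ?A)" using muB by simp
        then have "(sig mu ^^ q) ?A = (sig mu ^^ p') ?A" by (simp add: rho_inj)
        moreover have "q < L" "p' < L" using q p p' by auto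
        ultimately have "q = p'" using D1 by blast
        then show False using \<open>q \<noteq> p'\<close> by simp
      qed
    next
      case False
      then have B: "?B = rho ((sig mu ^^ p) ?A)" using Bcases by blast
      have "mu ?B = (sig mu ^^ Suc p) ?A" using B by (simp add: mu_rho_sig)
      then show ?thesis using sig_D2[OF g A] by metis
    qed
  qed
  have piece1: "(?A, (sig mu ^^ q) ?A) \<in> (Erel ?m)\<^sup>*" if "q < p1" for q
  proof -
    have "((sig mu ^^ 0) ?A, (sig mu ^^ q) ?A) \<in> (Erel ?m)\<^sup>*"
      by (rule path_lemma) (use cond that p1L in auto)
    then show ?thesis by simp
  qed
  have piece2: "((sig mu ^^ p1) ?A, (sig mu ^^ q) ?A) \<in> (Erel ?m)\<^sup>*" if "p1 \<le> q" "q < L" for q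
    by (rule path_lemma) (use cond that in auto)
  define a2 where "a2 = fst ((sig mu ^^ p1) ?A)"
  have a2: "a2 \<in> {1..n}" using sig_fst[OF g A] by (simp add: a2_def)
  have inA: "fst ((sig mu ^^ q) ?A) \<in> cyc ?m n a" if "q < p1" for q
    using cyc_conn[OF piece1[OF that]] sig_fst[OF g A] by simp
  have inA2: "fst ((sig mu ^^ q) ?A) \<in> cyc ?m n a2" if "p1 \<le> q" "q < L" for q
    using cyc_conn[OF piece2[OF that]] sig_fst[OF g A] by (simp add: a2_def)
  have xcases: "(cyc ?m n x = cyc ?m n a \<and> (\<lambda>q. fst ((sig mu ^^ q) ?A)) ` {0..<p1} \<subseteq> cyc ?m n x)
     \<or> (cyc ?m n x = cyc ?m n a2 \<and> (\<lambda>q. fst ((sig mu ^^ q) ?A)) ` {p1..<L} \<subseteq> cyc ?m n x)"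
    if x: "x \<in> cyc mu n a" for x
  proof -
    obtain q where q: "q < L" "fst ((sig mu ^^ q) ?A) = x"
      using cyc_char[OF g ab(2)] x by (auto simp: L_def)
    show ?thesis
    proof (cases "q < p1")
      case True
      then have "cyc ?m n x = cyc ?m n a" using cyc_trans[OF g'] inA q by metis
      moreover have "(\<lambda>q. fst ((sig mu ^^ q) ?A)) ` {0..<p1} \<subseteq> cyc ?m n a" using inA by auto
      ultimately show ?thesis by simp
    next
      case False
      then have "cyc ?m n x = cyc ?m n a2" using cyc_trans[OF g'] inA2 q by (metis not_less)
      moreover have "(\<lambda>q. fst ((sig mu ^^ q) ?A)) ` {p1..<L} \<subseteq> cyc ?m n a2" using inA2 by auto
      ultimately show ?thesis by simp
    qed
  qed
  show "\<exists>a2 \<in> {1..n}. \<forall>x \<in> cyc mu n a. cyc ?m n x = cyc ?m n a \<or> cyc ?m n x = cyc ?m n a2"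
    using a2 xcases by blast
  assume nbad: "\<not> bad mu k a b"
  have pk: "k \<le> p" "p + k < L" using nbad p p0 unfolding bad_def L_def by auto
  have c1: "card ((\<lambda>q. fst ((sig mu ^^ q) ?A)) ` {0..<p1}) = p1"
    using card_sig_range[OF g A, of p1 0] p1L by (simp add: L_def)
  have c2: "card ((\<lambda>q. fst ((sig mu ^^ q) ?A)) ` {p1..<L}) = L - p1"
    using card_sig_range[OF g A, of L p1] by (simp add: L_def)
  have "k \<le> p1" "k \<le> L - p1" using pk by (auto simp: p1_def)
  show "\<forall>x \<in> cyc mu n a. k \<le> card (cyc ?m n x)"
  proof
    fix x assume x: "x \<in> cyc mu n a"
    from xcases[OF x] show "k \<le> card (cyc ?m n x)"
    proof
      assume "cyc ?m n x = cyc ?m n a \<and> (\<lambda>q. fst ((sig mu ^^ q) ?A)) ` {0..<p1} \<subseteq> cyc ?m n x"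
      then have "p1 \<le> card (cyc ?m n x)" using card_mono[OF cyc_fin] c1 by metis
      then show ?thesis using \<open>k \<le> p1\<close> by simp
    next
      assume "cyc ?m n x = cyc ?m n a2 \<and> (\<lambda>q. fst ((sig mu ^^ q) ?A)) ` {p1..<L} \<subseteq> cyc ?m n x"
      then have "L - p1 \<le> card (cyc ?m n x)" using card_mono[OF cyc_fin] c2 by metis
      then show ?thesis using \<open>k \<le> L - p1\<close> by simp
    qed
  qed
qed

definition compo :: "(nat \<times> nat) set \<Rightarrow> nat \<Rightarrow> nat \<Rightarrow> nat set" where
  "compo R n v = {w \<in> {1..n}. (v, w) \<in> R\<^sup>*}"

definition Inv :: "nat \<Rightarrow> (nat \<times> bool \<Rightarrow> nat \<times> bool) \<Rightarrow> (nat \<times> nat) set \<Rightarrow> bool" where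
  "Inv n mu R \<longleftrightarrow> (\<forall>x. fst x \<in> {1..n} \<longrightarrow> (fst x, fst (mu x)) \<in> R\<^sup>*)"

definition Cnt :: "(nat \<times> bool \<Rightarrow> nat \<times> bool) \<Rightarrow> (nat \<times> nat) set \<Rightarrow> nat \<Rightarrow> nat \<Rightarrow> nat set set" where
  "Cnt mu R n k = {cyc mu n v | v. v \<in> {1..n} \<and> card (cyc mu n v) < k \<and> cyc mu n v \<noteq> compo R n v}"

lemma comp_self: "v \<in> {1..n} \<Longrightarrow> v \<in> compo R n v" by (simp add: compo_def)

lemma comp_sub: "compo R n v \<subseteq> {1..n}" unfolding compo_def by (rule subsetI) simp

lemma comp_fin: "finite (compo R n v)" by (rule finite_subset[OF comp_sub]) simp

lemma rtrancl_sym: "sym R \<Longrightarrow> (x, y) \<in> R\<^sup>* \<Longrightarrow> (y, x) \<in> R\<^sup>*"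
  by (drule sym_rtrancl) (erule symD)

lemma comp_trans: assumes s: "sym R" and w: "w \<in> compo R n v" shows "compo R n w = compo R n v"
proof -
  have 1: "(v, w) \<in> R\<^sup>*" using w by (simp add: compo_def)
  have 2: "(w, v) \<in> R\<^sup>*" using rtrancl_sym[OF s 1] .
  show ?thesis
  proof (rule set_eqI)
    fix z
    have "(w, z) \<in> R\<^sup>* \<longleftrightarrow> (v, z) \<in> R\<^sup>*"
    proof
      assume "(w, z) \<in> R\<^sup>*" then show "(v, z) \<in> R\<^sup>*" using 1 by (rule rtrancl_trans[rotated])
    next
      assume "(v, z) \<in> R\<^sup>*" then show "(w, z) \<in> R\<^sup>*" using 2 by (rule rtrancl_trans[rotated])
    qed
    then show "z \<in> compo R n w \<longleftrightarrow> z \<in> compo R n v" by (simp add: compo_def)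
  qed
qed

lemma rtrancl_mono_Un: "(x, y) \<in> R\<^sup>* \<Longrightarrow> (x, y) \<in> (R \<union> S)\<^sup>*"
  using rtrancl_mono[of R "R \<union> S"] by blast

lemma rt_ins: "(x, y) \<in> R\<^sup>* \<Longrightarrow> (x, y) \<in> (insert (a, b) (insert (b, a) R))\<^sup>*"
  using rtrancl_mono[of R "insert (a, b) (insert (b, a) R)"] by blast

lemma comp_mono: "compo R n v \<subseteq> compo (R \<union> S) n v"
  unfolding compo_def by (rule subsetI) (simp add: rtrancl_mono_Un)

lemma comp_unch:
  assumes "a \<notin> compo R n v" "b \<notin> compo R n v" "a \<in> {1..n}" "b \<in> {1..n}"
  shows "compo (R \<union> {(a, b), (b, a)}) n v = compo R n v"
proof -
  have "(v, w) \<in> R\<^sup>*" if "(v, w) \<in> (R \<union> {(a, b), (b, a)})\<^sup>*" for w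
    using that
  proof (induction rule: rtrancl_induct)
    case (step y z)
    have "(y, z) \<in> R"
    proof (rule ccontr)
      assume "(y, z) \<notin> R"
      then have "y = a \<or> y = b" using step.hyps(2) by auto
      then show False using step.IH assms by (auto simp: compo_def)
    qed
    then show ?case by (rule rtrancl_into_rtrancl[OF step.IH])
  qed simp
  then show ?thesis unfolding compo_def by (auto intro: rt_ins)
qed

lemma comp_join:
  assumes s: "sym R" and ab: "a \<in> {1..n}" "b \<in> {1..n}"
  shows "compo (R \<union> {(a, b), (b, a)}) n a = compo R n a \<union> compo R n b"
proof -
  let ?R = "R \<union> {(a, b), (b, a)}"
  have "(a, w) \<in> R\<^sup>* \<or> (b, w) \<in> R\<^sup>*" if "(a, w) \<in> ?R\<^sup>*" for w
    using that
  proof (induction rule: rtrancl_induct)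
    case (step y z)
    show ?case
    proof (cases "(y, z) \<in> R")
      case True then show ?thesis using step.IH by (blast intro: rtrancl_into_rtrancl[OF _ True])
    next
      case False then have "z = a \<or> z = b" using step.hyps(2) by auto
      then show ?thesis by auto
    qed
  qed simp
  moreover have "(a, w) \<in> ?R\<^sup>*" if "(b, w) \<in> R\<^sup>*" for w
  proof -
    have "(a, b) \<in> ?R\<^sup>*" by (rule r_into_rtrancl) simp
    then show ?thesis using rtrancl_trans[OF _ rtrancl_mono_Un[OF that, of "{(a, b), (b, a)}"]] by simp
  qed
  ultimately show ?thesis unfolding compo_def by (auto intro: rt_ins)
qed

lemma cyc_sub_comp:
  assumes g: "good n mu" and I: "Inv n mu R" and v: "v \<in> {1..n}"
  shows "cyc mu n v \<subseteq> compo R n v"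
proof
  fix w assume "w \<in> cyc mu n v"
  then have w: "w \<in> {1..n}" "((v, True), (w, True)) \<in> (Erel mu)\<^sup>*" by (auto simp: cyc_def)
  have "fst y \<in> {1..n} \<and> (v, fst y) \<in> R\<^sup>*" if "((v, True), y) \<in> (Erel mu)\<^sup>*" for y
    using that
  proof (induction rule: rtrancl_induct)
    case base then show ?case using v by simp
  next
    case (step y z)
    have z: "z = mu y \<or> z = rho y" using step.hyps(2) by (simp add: Erel_iff)
    then show ?case
    proof
      assume "z = mu y"
      moreover have "(fst y, fst (mu y)) \<in> R\<^sup>*" using step.IH I unfolding Inv_def by blast
      ultimately show ?thesis using step.IH good_fst_mu[OF g, of y] rtrancl_trans[of v "fst y" R "fst (mu y)"] by simp
    next
      assume "z = rho y" then show ?thesis using step.IH by simp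
    qed
  qed
  then show "w \<in> compo R n v" using w by (auto simp: compo_def)
qed

lemma Inv_upd:
  assumes g: "good n mu" and I: "Inv n mu R" and ab: "a \<in> {1..n}" "b \<in> {1..n}" and s: "sym R"
  shows "Inv n (upd a b m mu) (R \<union> {(a, b), (b, a)})"
  unfolding Inv_def
proof (intro allI impI)
  let ?R = "R \<union> {(a, b), (b, a)}"
  fix x :: "nat \<times> bool" assume x: "fst x \<in> {1..n}"
  have I': "(fst y, fst (mu y)) \<in> ?R\<^sup>*" if "fst y \<in> {1..n}" for y
  proof -
    have "(fst y, fst (mu y)) \<in> R\<^sup>*" using I that unfolding Inv_def by blast
    then show ?thesis by (rule rtrancl_mono_Un)
  qed
  have ab1: "(a, b) \<in> ?R\<^sup>*" "(b, a) \<in> ?R\<^sup>*" by (auto intro: r_into_rtrancl)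
  have trc: "(fst y, fst (tr (a, False) (b, False) y)) \<in> ?R\<^sup>*" "(fst (tr (a, False) (b, False) y), fst y) \<in> ?R\<^sup>*" for y
    using ab1 unfolding tr_def by simp_all
  have trD: "fst (tr (a, False) (b, False) y) \<in> {1..n}" if "fst y \<in> {1..n}" for y
    using that ab by (auto simp: tr_def)
  show "(fst x, fst (upd a b m mu x)) \<in> ?R\<^sup>*"
  proof (cases m)
    case True
    let ?t = "tr (a, False) (b, False)"
    have "(fst x, fst (?t x)) \<in> ?R\<^sup>*" by (rule trc)
    moreover have "(fst (?t x), fst (mu (?t x))) \<in> ?R\<^sup>*" using I' trD[OF x] by blast
    moreover have "(fst (mu (?t x)), fst (?t (mu (?t x)))) \<in> ?R\<^sup>*" by (rule trc)
    ultimately have "(fst x, fst (?t (mu (?t x)))) \<in> ?R\<^sup>*" by (metis (no_types) rtrancl_trans)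
    then show ?thesis using True by (simp add: upd_def)
  next
    case False
    have sR: "sym ?R" using s by (auto simp: sym_def)
    have A: "(a, fst (mu (a, False))) \<in> ?R\<^sup>*" "(b, fst (mu (b, False))) \<in> ?R\<^sup>*"
      using I'[of "(a, False)"] I'[of "(b, False)"] ab by auto
    have A': "(fst (mu (a, False)), a) \<in> ?R\<^sup>*" "(fst (mu (b, False)), b) \<in> ?R\<^sup>*"
      using rtrancl_sym[OF sR A(1)] rtrancl_sym[OF sR A(2)] by simp_all
    consider "x = (a, False)" | "x \<noteq> (a, False)" "x = (b, False)"
      | "x \<noteq> (a, False)" "x \<noteq> (b, False)" "x = mu (a, False)"
      | "x \<noteq> (a, False)" "x \<noteq> (b, False)" "x \<noteq> mu (a, False)" "x = mu (b, False)"
      | "x \<noteq> (a, False)" "x \<noteq> (b, False)" "x \<noteq> mu (a, False)" "x \<noteq> mu (b, False)" by blast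
    then show ?thesis
    proof cases
      case 1 then show ?thesis using False ab1 by (simp add: upd_def)
    next
      case 2 then show ?thesis using False ab1 by (simp add: upd_def)
    next
      case 3
      have "(fst (mu (a, False)), fst (mu (b, False))) \<in> ?R\<^sup>*"
        using rtrancl_trans[OF rtrancl_trans[OF A'(1) ab1(1)] A(2)] .
      then show ?thesis using False 3 by (simp add: upd_def)
    next
      case 4
      have "(fst (mu (b, False)), fst (mu (a, False))) \<in> ?R\<^sup>*"
        using rtrancl_trans[OF rtrancl_trans[OF A'(2) ab1(2)] A(1)] .
      then show ?thesis using False 4 by (simp add: upd_def)
    next
      case 5 then show ?thesis using False I' x by (simp add: upd_def)
    qed
  qed
qed

lemma Cnt_fin: "finite (Cnt mu R n k)"
proof (rule finite_subset)
  show "Cnt mu R n k \<subseteq> Pow {1..n}" using cyc_sub by (auto simp: Cnt_def)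
qed simp

lemma step_count:
  assumes g: "good n mu" and I: "Inv n mu R" and s: "sym R" and ab: "a \<noteq> b" "a \<in> {1..n}" "b \<in> {1..n}"
  shows "card (Cnt (upd a b m mu) (R \<union> {(a, b), (b, a)}) n k)
           \<le> card (Cnt mu R n k) + (if bad mu k a b \<and> bad mu k b a then 2 else 0)"
proof -
  let ?m = "upd a b m mu" and ?R = "R \<union> {(a, b), (b, a)}"
  have g': "good n ?m" using upd_good[OF g ab] .
  have I': "Inv n ?m ?R" using Inv_upd[OF g I ab(2,3) s] .
  have s': "sym ?R" using s by (auto simp: sym_def)
  define Z where "Z = cyc mu n a \<union> cyc mu n b"
  define Cd where "Cd = {X \<in> Cnt mu R n k. a \<notin> X \<and> b \<notin> X}"
  define Ex where "Ex = {X \<in> Cnt ?m ?R n k. \<exists>v \<in> Z. X = cyc ?m n v}"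
  have finCd: "finite Cd" using Cnt_fin[of mu R n k] by (simp add: Cd_def)
  have finEx: "finite Ex" using Cnt_fin[of ?m ?R n k] by (simp add: Ex_def)
  have CdC: "Cd \<subseteq> Cnt mu R n k" by (auto simp: Cd_def)
  have claim1: "Cnt ?m ?R n k \<subseteq> Cd \<union> Ex"
  proof
    fix X assume X: "X \<in> Cnt ?m ?R n k"
    then obtain v where v: "v \<in> {1..n}" "X = cyc ?m n v" "card (cyc ?m n v) < k" "cyc ?m n v \<noteq> compo ?R n v"
      by (auto simp: Cnt_def)
    show "X \<in> Cd \<union> Ex"
    proof (cases "v \<in> Z")
      case True then show ?thesis using X v by (auto simp: Ex_def)
    next
      case False
      have na: "a \<notin> cyc mu n v"
      proof
        assume "a \<in> cyc mu n v"
        then have "cyc mu n a = cyc mu n v" by (rule cyc_trans[OF g])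
        then show False using False cyc_self[OF v(1)] by (auto simp: Z_def)
      qed
      have nb: "b \<notin> cyc mu n v"
      proof
        assume "b \<in> cyc mu n v"
        then have "cyc mu n b = cyc mu n v" by (rule cyc_trans[OF g])
        then show False using False cyc_self[OF v(1)] by (auto simp: Z_def)
      qed
      have eq: "cyc ?m n v = cyc mu n v" using cyc_unchanged[OF g v(1) na nb ab(2,3)] .
      have ne: "cyc mu n v \<noteq> compo R n v"
      proof
        assume e: "cyc mu n v = compo R n v"
        then have "compo ?R n v = compo R n v" using comp_unch[of a R n v b] na nb ab by simp
        then show False using v(4) eq e by simp
      qed
      have "X \<in> Cnt mu R n k" using v eq ne by (auto simp: Cnt_def)
      then show ?thesis using v(2) eq na nb by (auto simp: Cd_def)
    qed
  qed
  have le1: "card (Cnt ?m ?R n k) \<le> card Cd + card Ex"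
    using card_mono[OF finite_UnI[OF finCd finEx] claim1] card_Un_le[of Cd Ex] by linarith
  show ?thesis
  proof (cases "b \<in> cyc mu n a")
    case False
    have inA: "x \<in> cyc ?m n a" if "x \<in> Z" for x using merge_case[OF g ab False] that by (simp add: Z_def)
    have Ex1: "Ex \<subseteq> {cyc ?m n a}"
    proof
      fix X assume "X \<in> Ex"
      then obtain v where "v \<in> Z" "X = cyc ?m n v" by (auto simp: Ex_def)
      then show "X \<in> {cyc ?m n a}" using cyc_trans[OF g' inA] by simp
    qed
    show ?thesis
    proof (cases "Ex = {}")
      case True then show ?thesis using le1 card_mono[OF Cnt_fin CdC] by simp
    next
      case False
      then obtain X where "X \<in> Ex" by blast
      then obtain v where v: "v \<in> Z" "X = cyc ?m n v" "X \<in> Cnt ?m ?R n k" by (auto simp: Ex_def)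
      then obtain w where w: "w \<in> {1..n}" "X = cyc ?m n w" "card (cyc ?m n w) < k" "cyc ?m n w \<noteq> compo ?R n w"
        by (auto simp: Cnt_def)
      have Xa: "X = cyc ?m n a" using v(1,2) cyc_trans[OF g' inA] by simp
      have wa: "w \<in> cyc ?m n a" using w(1,2) Xa cyc_self by metis
      have cw: "compo ?R n w = compo ?R n a"
        using comp_trans[OF s'] cyc_sub_comp[OF g' I' ab(2)] wa by blast
      have small: "card (cyc ?m n a) < k" and ne: "cyc ?m n a \<noteq> compo ?R n a" using w Xa cw by auto
      have subs: "cyc mu n a \<subseteq> cyc ?m n a" "cyc mu n b \<subseteq> cyc ?m n a" using inA by (auto simp: Z_def)
      have sa: "card (cyc mu n a) < k" "card (cyc mu n b) < k"
        using card_mono[OF cyc_fin subs(1)] card_mono[OF cyc_fin subs(2)] small by auto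
      have "\<exists>Y \<in> Cnt mu R n k. Y \<notin> Cd"
      proof (cases "cyc mu n a = compo R n a")
        case ca: True
        show ?thesis
        proof (cases "cyc mu n b = compo R n b")
          case cb: True
          have "compo ?R n a = compo R n a \<union> compo R n b" using comp_join[OF s ab(2,3)] .
          also have "\<dots> \<subseteq> cyc ?m n a" using ca cb subs by simp
          finally have "cyc ?m n a = compo ?R n a" using cyc_sub_comp[OF g' I' ab(2)] by blast
          then show ?thesis using ne by simp
        next
          case False
          then have "cyc mu n b \<in> Cnt mu R n k" using sa ab by (auto simp: Cnt_def)
          moreover have "cyc mu n b \<notin> Cd" using cyc_self[OF ab(3)] by (auto simp: Cd_def)
          ultimately show ?thesis by blast
        qed
      next
        case False
        then have "cyc mu n a \<in> Cnt mu R n k" using sa ab by (auto simp: Cnt_def)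
        moreover have "cyc mu n a \<notin> Cd" using cyc_self[OF ab(2)] by (auto simp: Cd_def)
        ultimately show ?thesis by blast
      qed
      then have "Cd \<subset> Cnt mu R n k" using CdC by blast
      then have "card Cd < card (Cnt mu R n k)" using psubset_card_mono[OF Cnt_fin] by blast
      moreover have "card Ex \<le> 1" using card_mono[OF _ Ex1] by simp
      ultimately show ?thesis using le1 by simp
    qed
  next
    case True
    have Zeq: "Z = cyc mu n a" using cyc_trans[OF g True] by (simp add: Z_def)
    obtain a2 where a2: "\<forall>x \<in> cyc mu n a. cyc ?m n x = cyc ?m n a \<or> cyc ?m n x = cyc ?m n a2"
      using same_case(1)[OF g ab True, of m] by blast
    have Ex2: "Ex \<subseteq> {cyc ?m n a, cyc ?m n a2}"
    proof
      fix X assume "X \<in> Ex"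
      then obtain v where "v \<in> Z" "X = cyc ?m n v" by (auto simp: Ex_def)
      then show "X \<in> {cyc ?m n a, cyc ?m n a2}" using a2 Zeq by auto
    qed
    have cEx: "card Ex \<le> 2"
    proof -
      have "card {cyc ?m n a, cyc ?m n a2} \<le> 2" by (simp add: card_insert_le_m1)
      then show ?thesis using card_mono[OF _ Ex2] by (meson finite.emptyI finite.insertI le_trans)
    qed
    have empty: "Ex = {}" if big: "\<forall>x \<in> cyc mu n a. k \<le> card (cyc ?m n x)"
    proof -
      { fix X assume "X \<in> Ex"
        then obtain v where "v \<in> Z" "X = cyc ?m n v" "X \<in> Cnt ?m ?R n k" by (auto simp: Ex_def)
        then obtain w where "X = cyc ?m n w" "card (cyc ?m n w) < k" by (auto simp: Cnt_def)
        then have False using big \<open>v \<in> Z\<close> \<open>X = cyc ?m n v\<close> Zeq by fastforce }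
      then show ?thesis by blast
    qed
    show ?thesis
    proof (cases "bad mu k a b \<and> bad mu k b a")
      case True then show ?thesis using le1 cEx card_mono[OF Cnt_fin CdC] by simp
    next
      case False
      have "Ex = {}"
      proof (cases "bad mu k a b")
        case False then show ?thesis using empty same_case(2)[OF g ab True, of k m] by blast
      next
        case True
        then have nb: "\<not> bad mu k b a" using \<open>\<not> (bad mu k a b \<and> bad mu k b a)\<close> by blast
        have ab': "b \<noteq> a" "b \<in> {1..n}" "a \<in> {1..n}" using ab by auto
        have "a \<in> cyc mu n b" using cyc_trans[OF g \<open>b \<in> cyc mu n a\<close>] cyc_self[OF ab(2)] by simp
        then have "\<forall>x \<in> cyc mu n b. k \<le> card (cyc (upd b a m mu) n x)"
          using same_case(2)[OF g ab' _ nb] by blast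
        moreover have "cyc mu n b = cyc mu n a" using cyc_trans[OF g \<open>b \<in> cyc mu n a\<close>] .
        ultimately show ?thesis using empty upd_sym[of b a m mu] by simp
      qed
      then show ?thesis using le1 card_mono[OF Cnt_fin CdC] by simp
    qed
  qed
qed

definition innr :: "nat \<Rightarrow> link list \<Rightarrow> ((nat \<times> nat) \<times> (nat \<times> nat)) set" where
  "innr n \<omega> =
     {((v, j - 1), (v, j)) | v j. v \<in> {1..n} \<and> j \<in> {1..length \<omega>} \<and> v \<notin> fst (\<omega> ! (j - 1))}
   \<union> {((v, j - 1), (w, j)) | v w j. j \<in> {1..length \<omega>} \<and> snd (\<omega> ! (j - 1))
          \<and> v \<noteq> w \<and> fst (\<omega> ! (j - 1)) = {v, w}}
   \<union> {((v, j - 1), (w, j - 1)) | v w j. j \<in> {1..length \<omega>} \<and> \<not> snd (\<omega> ! (j - 1))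
          \<and> v \<noteq> w \<and> fst (\<omega> ! (j - 1)) = {v, w}}
   \<union> {((v, j), (w, j)) | v w j. j \<in> {1..length \<omega>} \<and> \<not> snd (\<omega> ! (j - 1))
          \<and> v \<noteq> w \<and> fst (\<omega> ! (j - 1)) = {v, w}}"

definition Tz :: "nat \<Rightarrow> link list \<Rightarrow> ((nat \<times> nat) \<times> (nat \<times> nat)) set" where
  "Tz n \<omega> = {((v, length \<omega>), (v, 0)) | v. v \<in> {1..n}}"

lemma seg_adj_split: "seg_adj n \<omega> = Tz n \<omega> \<union> innr n \<omega>"
  unfolding seg_adj_def innr_def Tz_def by blast

definition Lset :: "nat \<Rightarrow> nat \<Rightarrow> link \<Rightarrow> ((nat \<times> nat) \<times> (nat \<times> nat)) set" where
  "Lset n s l =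
     {((v, s), (v, Suc s)) | v. v \<in> {1..n} \<and> v \<notin> fst l}
   \<union> {((v, s), (w, Suc s)) | v w. snd l \<and> v \<noteq> w \<and> fst l = {v, w}}
   \<union> {((v, s), (w, s)) | v w. \<not> snd l \<and> v \<noteq> w \<and> fst l = {v, w}}
   \<union> {((v, Suc s), (w, Suc s)) | v w. \<not> snd l \<and> v \<noteq> w \<and> fst l = {v, w}}"

lemma nth_snoc_cases: "j \<in> {1..Suc (length \<omega>)} \<Longrightarrow> (j \<in> {1..length \<omega>} \<and> (\<omega> @ [l]) ! (j - 1) = \<omega> ! (j - 1)) \<or> (j = Suc (length \<omega>) \<and> (\<omega> @ [l]) ! (j - 1) = l)"
  by (cases "j = Suc (length \<omega>)") (auto simp: nth_append)

lemma nth_snoc1: "j \<in> {1..length \<omega>} \<Longrightarrow> (\<omega> @ [l]) ! (j - 1) = \<omega> ! (j - 1)"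
  by (auto simp: nth_append)

lemma innr_snoc: "innr n (\<omega> @ [l]) = innr n \<omega> \<union> Lset n (length \<omega>) l"
proof -
  let ?s = "length \<omega>"
  have c1: "{((v, j - 1), (v, j)) | v j. v \<in> {1..n} \<and> j \<in> {1..length (\<omega> @ [l])} \<and> v \<notin> fst ((\<omega> @ [l]) ! (j - 1))}
    = {((v, j - 1), (v, j)) | v j. v \<in> {1..n} \<and> j \<in> {1..?s} \<and> v \<notin> fst (\<omega> ! (j - 1))}
      \<union> {((v, ?s), (v, Suc ?s)) | v. v \<in> {1..n} \<and> v \<notin> fst l}"
  proof (intro set_eqI iffI)
    fix z assume "z \<in> {((v, j - 1), (v, j)) | v j. v \<in> {1..n} \<and> j \<in> {1..length (\<omega> @ [l])} \<and> v \<notin> fst ((\<omega> @ [l]) ! (j - 1))}"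
    then obtain v j where "z = ((v, j - 1), (v, j))" "v \<in> {1..n}" "j \<in> {1..Suc ?s}" "v \<notin> fst ((\<omega> @ [l]) ! (j - 1))" by auto
    then show "z \<in> {((v, j - 1), (v, j)) | v j. v \<in> {1..n} \<and> j \<in> {1..?s} \<and> v \<notin> fst (\<omega> ! (j - 1))}
      \<union> {((v, ?s), (v, Suc ?s)) | v. v \<in> {1..n} \<and> v \<notin> fst l}"
      using nth_snoc_cases[of j \<omega> l] by auto
  next
    fix z assume "z \<in> {((v, j - 1), (v, j)) | v j. v \<in> {1..n} \<and> j \<in> {1..?s} \<and> v \<notin> fst (\<omega> ! (j - 1))}
      \<union> {((v, ?s), (v, Suc ?s)) | v. v \<in> {1..n} \<and> v \<notin> fst l}"
    then show "z \<in> {((v, j - 1), (v, j)) | v j. v \<in> {1..n} \<and> j \<in> {1..length (\<omega> @ [l])} \<and> v \<notin> fst ((\<omega> @ [l]) ! (j - 1))}"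
    proof
      assume "z \<in> {((v, j - 1), (v, j)) | v j. v \<in> {1..n} \<and> j \<in> {1..?s} \<and> v \<notin> fst (\<omega> ! (j - 1))}"
      then obtain v j where "z = ((v, j - 1), (v, j))" "v \<in> {1..n}" "j \<in> {1..?s}" "v \<notin> fst (\<omega> ! (j - 1))" by auto
      then show ?thesis using nth_snoc1[of j \<omega> l] by force
    next
      assume "z \<in> {((v, ?s), (v, Suc ?s)) | v. v \<in> {1..n} \<and> v \<notin> fst l}"
      then obtain v where "z = ((v, ?s), (v, Suc ?s))" "v \<in> {1..n}" "v \<notin> fst l" by auto
      then show ?thesis by (intro CollectI exI[of _ v] exI[of _ "Suc ?s"]) simp
    qed
  qed
  have c2: "{((v, j - 1), (w, j)) | v w j. j \<in> {1..length (\<omega> @ [l])} \<and> snd ((\<omega> @ [l]) ! (j - 1)) \<and> v \<noteq> w \<and> fst ((\<omega> @ [l]) ! (j - 1)) = {v, w}}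
    = {((v, j - 1), (w, j)) | v w j. j \<in> {1..?s} \<and> snd (\<omega> ! (j - 1)) \<and> v \<noteq> w \<and> fst (\<omega> ! (j - 1)) = {v, w}} \<union> {((v, ?s), (w, Suc ?s)) | v w. snd l \<and> v \<noteq> w \<and> fst l = {v, w}}"
  proof (intro set_eqI iffI)
    fix z assume "z \<in> {((v, j - 1), (w, j)) | v w j. j \<in> {1..length (\<omega> @ [l])} \<and> snd ((\<omega> @ [l]) ! (j - 1)) \<and> v \<noteq> w \<and> fst ((\<omega> @ [l]) ! (j - 1)) = {v, w}}"
    then obtain v w j where zz: "z = ((v, j - 1), (w, j))" and jj: "j \<in> {1..Suc ?s}" and cc: "snd ((\<omega> @ [l]) ! (j - 1)) \<and> v \<noteq> w \<and> fst ((\<omega> @ [l]) ! (j - 1)) = {v, w}" by auto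
    from nth_snoc_cases[OF jj, where l=l] show "z \<in> {((v, j - 1), (w, j)) | v w j. j \<in> {1..?s} \<and> snd (\<omega> ! (j - 1)) \<and> v \<noteq> w \<and> fst (\<omega> ! (j - 1)) = {v, w}} \<union> {((v, ?s), (w, Suc ?s)) | v w. snd l \<and> v \<noteq> w \<and> fst l = {v, w}}"
    proof (elim disjE conjE)
      assume j1: "j \<in> {1..?s}" and e: "(\<omega> @ [l]) ! (j - 1) = \<omega> ! (j - 1)"
      have "snd (\<omega> ! (j - 1)) \<and> v \<noteq> w \<and> fst (\<omega> ! (j - 1)) = {v, w}" using cc unfolding e .
      then show ?thesis using zz j1 by blast
    next
      assume j1: "j = Suc ?s" and e: "(\<omega> @ [l]) ! (j - 1) = l"
      have "snd l \<and> v \<noteq> w \<and> fst l = {v, w}" using cc unfolding e .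
      then show ?thesis using zz j1 by simp
    qed
  next
    fix z assume "z \<in> {((v, j - 1), (w, j)) | v w j. j \<in> {1..?s} \<and> snd (\<omega> ! (j - 1)) \<and> v \<noteq> w \<and> fst (\<omega> ! (j - 1)) = {v, w}} \<union> {((v, ?s), (w, Suc ?s)) | v w. snd l \<and> v \<noteq> w \<and> fst l = {v, w}}"
    then show "z \<in> {((v, j - 1), (w, j)) | v w j. j \<in> {1..length (\<omega> @ [l])} \<and> snd ((\<omega> @ [l]) ! (j - 1)) \<and> v \<noteq> w \<and> fst ((\<omega> @ [l]) ! (j - 1)) = {v, w}}"
    proof
      assume "z \<in> {((v, j - 1), (w, j)) | v w j. j \<in> {1..?s} \<and> snd (\<omega> ! (j - 1)) \<and> v \<noteq> w \<and> fst (\<omega> ! (j - 1)) = {v, w}}"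
      then obtain v w j where "z = ((v, j - 1), (w, j))" "j \<in> {1..?s}" "snd (\<omega> ! (j - 1)) \<and> v \<noteq> w \<and> fst (\<omega> ! (j - 1)) = {v, w}" by auto
      then show ?thesis using nth_snoc1[of j \<omega> l] by force
    next
      assume "z \<in> {((v, ?s), (w, Suc ?s)) | v w. snd l \<and> v \<noteq> w \<and> fst l = {v, w}}"
      then obtain v w where "z = ((v, ?s), (w, Suc ?s))" "snd l \<and> v \<noteq> w \<and> fst l = {v, w}" by auto
      then show ?thesis by (intro CollectI exI[of _ v] exI[of _ w] exI[of _ "Suc ?s"]) simp
    qed
  qed
  have c3: "{((v, j - 1), (w, j - 1)) | v w j. j \<in> {1..length (\<omega> @ [l])} \<and> \<not> snd ((\<omega> @ [l]) ! (j - 1)) \<and> v \<noteq> w \<and> fst ((\<omega> @ [l]) ! (j - 1)) = {v, w}}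
    = {((v, j - 1), (w, j - 1)) | v w j. j \<in> {1..?s} \<and> \<not> snd (\<omega> ! (j - 1)) \<and> v \<noteq> w \<and> fst (\<omega> ! (j - 1)) = {v, w}} \<union> {((v, ?s), (w, ?s)) | v w. \<not> snd l \<and> v \<noteq> w \<and> fst l = {v, w}}"
  proof (intro set_eqI iffI)
    fix z assume "z \<in> {((v, j - 1), (w, j - 1)) | v w j. j \<in> {1..length (\<omega> @ [l])} \<and> \<not> snd ((\<omega> @ [l]) ! (j - 1)) \<and> v \<noteq> w \<and> fst ((\<omega> @ [l]) ! (j - 1)) = {v, w}}"
    then obtain v w j where zz: "z = ((v, j - 1), (w, j - 1))" and jj: "j \<in> {1..Suc ?s}" and cc: "\<not> snd ((\<omega> @ [l]) ! (j - 1)) \<and> v \<noteq> w \<and> fst ((\<omega> @ [l]) ! (j - 1)) = {v, w}" by auto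
    from nth_snoc_cases[OF jj, where l=l] show "z \<in> {((v, j - 1), (w, j - 1)) | v w j. j \<in> {1..?s} \<and> \<not> snd (\<omega> ! (j - 1)) \<and> v \<noteq> w \<and> fst (\<omega> ! (j - 1)) = {v, w}} \<union> {((v, ?s), (w, ?s)) | v w. \<not> snd l \<and> v \<noteq> w \<and> fst l = {v, w}}"
    proof (elim disjE conjE)
      assume j1: "j \<in> {1..?s}" and e: "(\<omega> @ [l]) ! (j - 1) = \<omega> ! (j - 1)"
      have "\<not> snd (\<omega> ! (j - 1)) \<and> v \<noteq> w \<and> fst (\<omega> ! (j - 1)) = {v, w}" using cc unfolding e .
      then show ?thesis using zz j1 by blast
    next
      assume j1: "j = Suc ?s" and e: "(\<omega> @ [l]) ! (j - 1) = l"
      have "\<not> snd l \<and> v \<noteq> w \<and> fst l = {v, w}" using cc unfolding e .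
      then show ?thesis using zz j1 by simp
    qed
  next
    fix z assume "z \<in> {((v, j - 1), (w, j - 1)) | v w j. j \<in> {1..?s} \<and> \<not> snd (\<omega> ! (j - 1)) \<and> v \<noteq> w \<and> fst (\<omega> ! (j - 1)) = {v, w}} \<union> {((v, ?s), (w, ?s)) | v w. \<not> snd l \<and> v \<noteq> w \<and> fst l = {v, w}}"
    then show "z \<in> {((v, j - 1), (w, j - 1)) | v w j. j \<in> {1..length (\<omega> @ [l])} \<and> \<not> snd ((\<omega> @ [l]) ! (j - 1)) \<and> v \<noteq> w \<and> fst ((\<omega> @ [l]) ! (j - 1)) = {v, w}}"
    proof
      assume "z \<in> {((v, j - 1), (w, j - 1)) | v w j. j \<in> {1..?s} \<and> \<not> snd (\<omega> ! (j - 1)) \<and> v \<noteq> w \<and> fst (\<omega> ! (j - 1)) = {v, w}}"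
      then obtain v w j where "z = ((v, j - 1), (w, j - 1))" "j \<in> {1..?s}" "\<not> snd (\<omega> ! (j - 1)) \<and> v \<noteq> w \<and> fst (\<omega> ! (j - 1)) = {v, w}" by auto
      then show ?thesis using nth_snoc1[of j \<omega> l] by force
    next
      assume "z \<in> {((v, ?s), (w, ?s)) | v w. \<not> snd l \<and> v \<noteq> w \<and> fst l = {v, w}}"
      then obtain v w where "z = ((v, ?s), (w, ?s))" "\<not> snd l \<and> v \<noteq> w \<and> fst l = {v, w}" by auto
      then show ?thesis by (intro CollectI exI[of _ v] exI[of _ w] exI[of _ "Suc ?s"]) simp
    qed
  qed
  have c4: "{((v, j), (w, j)) | v w j. j \<in> {1..length (\<omega> @ [l])} \<and> \<not> snd ((\<omega> @ [l]) ! (j - 1)) \<and> v \<noteq> w \<and> fst ((\<omega> @ [l]) ! (j - 1)) = {v, w}}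
    = {((v, j), (w, j)) | v w j. j \<in> {1..?s} \<and> \<not> snd (\<omega> ! (j - 1)) \<and> v \<noteq> w \<and> fst (\<omega> ! (j - 1)) = {v, w}} \<union> {((v, Suc ?s), (w, Suc ?s)) | v w. \<not> snd l \<and> v \<noteq> w \<and> fst l = {v, w}}"
  proof (intro set_eqI iffI)
    fix z assume "z \<in> {((v, j), (w, j)) | v w j. j \<in> {1..length (\<omega> @ [l])} \<and> \<not> snd ((\<omega> @ [l]) ! (j - 1)) \<and> v \<noteq> w \<and> fst ((\<omega> @ [l]) ! (j - 1)) = {v, w}}"
    then obtain v w j where zz: "z = ((v, j), (w, j))" and jj: "j \<in> {1..Suc ?s}" and cc: "\<not> snd ((\<omega> @ [l]) ! (j - 1)) \<and> v \<noteq> w \<and> fst ((\<omega> @ [l]) ! (j - 1)) = {v, w}" by auto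
    from nth_snoc_cases[OF jj, where l=l] show "z \<in> {((v, j), (w, j)) | v w j. j \<in> {1..?s} \<and> \<not> snd (\<omega> ! (j - 1)) \<and> v \<noteq> w \<and> fst (\<omega> ! (j - 1)) = {v, w}} \<union> {((v, Suc ?s), (w, Suc ?s)) | v w. \<not> snd l \<and> v \<noteq> w \<and> fst l = {v, w}}"
    proof (elim disjE conjE)
      assume j1: "j \<in> {1..?s}" and e: "(\<omega> @ [l]) ! (j - 1) = \<omega> ! (j - 1)"
      have "\<not> snd (\<omega> ! (j - 1)) \<and> v \<noteq> w \<and> fst (\<omega> ! (j - 1)) = {v, w}" using cc unfolding e .
      then show ?thesis using zz j1 by blast
    next
      assume j1: "j = Suc ?s" and e: "(\<omega> @ [l]) ! (j - 1) = l"
      have "\<not> snd l \<and> v \<noteq> w \<and> fst l = {v, w}" using cc unfolding e .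
      then show ?thesis using zz j1 by simp
    qed
  next
    fix z assume "z \<in> {((v, j), (w, j)) | v w j. j \<in> {1..?s} \<and> \<not> snd (\<omega> ! (j - 1)) \<and> v \<noteq> w \<and> fst (\<omega> ! (j - 1)) = {v, w}} \<union> {((v, Suc ?s), (w, Suc ?s)) | v w. \<not> snd l \<and> v \<noteq> w \<and> fst l = {v, w}}"
    then show "z \<in> {((v, j), (w, j)) | v w j. j \<in> {1..length (\<omega> @ [l])} \<and> \<not> snd ((\<omega> @ [l]) ! (j - 1)) \<and> v \<noteq> w \<and> fst ((\<omega> @ [l]) ! (j - 1)) = {v, w}}"
    proof
      assume "z \<in> {((v, j), (w, j)) | v w j. j \<in> {1..?s} \<and> \<not> snd (\<omega> ! (j - 1)) \<and> v \<noteq> w \<and> fst (\<omega> ! (j - 1)) = {v, w}}"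
      then obtain v w j where "z = ((v, j), (w, j))" "j \<in> {1..?s}" "\<not> snd (\<omega> ! (j - 1)) \<and> v \<noteq> w \<and> fst (\<omega> ! (j - 1)) = {v, w}" by auto
      then show ?thesis using nth_snoc1[of j \<omega> l] by force
    next
      assume "z \<in> {((v, Suc ?s), (w, Suc ?s)) | v w. \<not> snd l \<and> v \<noteq> w \<and> fst l = {v, w}}"
      then obtain v w where "z = ((v, Suc ?s), (w, Suc ?s))" "\<not> snd l \<and> v \<noteq> w \<and> fst l = {v, w}" by auto
      then show ?thesis by (intro CollectI exI[of _ v] exI[of _ w] exI[of _ "Suc ?s"]) simp
    qed
  qed
  show ?thesis unfolding innr_def Lset_def c1 c2 c3 c4 by blast
qed

definition node :: "nat \<Rightarrow> nat \<times> bool \<Rightarrow> nat \<times> nat" where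
  "node s x = (fst x, if snd x then 0 else s)"

definition Sy :: "('a \<times> 'a) set \<Rightarrow> ('a \<times> 'a) set" where
  "Sy R = R \<union> R\<inverse>"

lemma Sy_sym: "sym (Sy R)" by (auto simp: Sy_def sym_def)

lemma Sy_rt_sym: "(x, y) \<in> (Sy R)\<^sup>* \<Longrightarrow> (y, x) \<in> (Sy R)\<^sup>*"
  by (rule rtrancl_sym[OF Sy_sym])

lemma Sy_Un: "Sy (R \<union> S) = Sy R \<union> Sy S" by (auto simp: Sy_def)

lemma innr_nodes: "(z1, z2) \<in> innr n \<omega> \<Longrightarrow> snd z1 \<le> length \<omega> \<and> snd z2 \<le> length \<omega>"
  unfolding innr_def by auto

lemma Sy_innr_nodes: "(z1, z2) \<in> Sy (innr n \<omega>) \<Longrightarrow> snd z1 \<le> length \<omega> \<and> snd z2 \<le> length \<omega>"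
  unfolding Sy_def using innr_nodes by fastforce

definition IHc :: "nat \<Rightarrow> link list \<Rightarrow> (nat \<times> bool \<Rightarrow> nat \<times> bool) \<Rightarrow> bool" where
  "IHc n \<omega> mu \<longleftrightarrow> (\<forall>x y. fst x \<in> {1..n} \<longrightarrow> fst y \<in> {1..n} \<longrightarrow>
      ((node (length \<omega>) x, node (length \<omega>) y) \<in> (Sy (innr n \<omega>))\<^sup>* \<longleftrightarrow> y = x \<or> y = mu x))"

definition nc :: "nat \<Rightarrow> nat \<Rightarrow> bool \<Rightarrow> (nat \<times> bool \<Rightarrow> nat \<times> bool) \<Rightarrow> nat \<times> bool \<Rightarrow> (nat \<times> bool) set" where
  "nc a b m mu x = (if x = (a, False) \<or> x = (b, False) then
      (if m then {tr (a, False) (b, False) x, upd a b m mu (tr (a, False) (b, False) x)}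
       else if mu (a, False) = (b, False) then {} else {mu (a, False), mu (b, False)})
     else {x, upd a b m mu x})"

lemma nc_mu:
  assumes g: "good n mu" and ab: "a \<noteq> b"
  shows "nc a b m mu (mu x) = nc a b m mu x"
proof -
  let ?A = "(a, False)" and ?B = "(b, False)"
  note G = goodD[OF g]
  have AB: "?A \<noteq> ?B" using ab by simp
  have minj: "mu x = mu y \<longleftrightarrow> x = y" for x y using good_mu_inj[OF g] by blast
  have sw: "mu ?A = ?B \<longleftrightarrow> mu ?B = ?A" using G(1) by metis
  show ?thesis
  proof (cases m)
    case True
    note d = nc_def upd_cross True tr_def
    consider "x = ?A" | "x = ?B" | "x \<noteq> ?A" "x \<noteq> ?B" "mu x = ?A" | "x \<noteq> ?A" "x \<noteq> ?B" "mu x = ?B"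
      | "x \<noteq> ?A" "x \<noteq> ?B" "mu x \<noteq> ?A" "mu x \<noteq> ?B" by blast
    then show ?thesis
    proof cases
      case 1
      show ?thesis
      proof (cases "mu ?A = ?B")
        case True then have "mu ?B = ?A" using sw by simp
        then show ?thesis using 1 AB G True by (auto simp: d)
      next
        case False then have "mu ?B \<noteq> ?A" using sw by simp
        then show ?thesis using 1 AB G False by (auto simp: d)
      qed
    next
      case 2
      show ?thesis
      proof (cases "mu ?B = ?A")
        case True then have "mu ?A = ?B" using sw by simp
        then show ?thesis using 2 AB G True by (auto simp: d)
      next
        case False then have "mu ?A \<noteq> ?B" using sw by simp
        then show ?thesis using 2 AB G False by (auto simp: d)
      qed
    next
      case 3
      have x: "x = mu ?A" using 3 G(1) by metis
      have u1: "upd a b m mu x = ?B" using 3 True by (simp add: upd_cross tr_def)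
      have u2: "upd a b m mu ?B = x" using 3 True x by (simp add: upd_cross tr_def)
      have n1: "nc a b m mu (mu x) = {?B, x}" using 3(3) True u2 by (simp add: nc_def tr_def)
      have n2: "nc a b m mu x = {x, ?B}" using 3(1,2) u1 by (simp add: nc_def)
      show ?thesis using n1 n2 by auto
    next
      case 4
      have x: "x = mu ?B" using 4 G(1) by metis
      have u1: "upd a b m mu x = ?A" using 4 True by (simp add: upd_cross tr_def)
      have u2: "upd a b m mu ?A = x" using 4 True x AB by (simp add: upd_cross tr_def)
      have n1: "nc a b m mu (mu x) = {?A, x}" using 4(3) True u2 AB by (simp add: nc_def tr_def)
      have n2: "nc a b m mu x = {x, ?A}" using 4(1,2) u1 by (simp add: nc_def)
      show ?thesis using n1 n2 by auto
    next
      case 5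
      have u1: "upd a b m mu x = mu x" using 5 True by (simp add: upd_cross tr_def)
      have u2: "upd a b m mu (mu x) = x" using 5 True by (simp add: upd_cross tr_def G(1))
      have n1: "nc a b m mu (mu x) = {mu x, x}" using 5(3,4) u2 by (simp add: nc_def)
      have n2: "nc a b m mu x = {x, mu x}" using 5(1,2) u1 by (simp add: nc_def)
      show ?thesis using n1 n2 by auto
    qed
  next
    case False
    have f: "upd a b False mu y = (if y = ?A then ?B else if y = ?B then ?A
       else if y = mu ?A then mu ?B else if y = mu ?B then mu ?A else mu y)" for y
      by (simp add: upd_def)
    have mF: "m = False" using False by simp
    note d = nc_def f mF
    consider "x = ?A" | "x = ?B" | "x \<noteq> ?A" "x \<noteq> ?B" "mu x = ?A" | "x \<noteq> ?A" "x \<noteq> ?B" "mu x = ?B"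
      | "x \<noteq> ?A" "x \<noteq> ?B" "mu x \<noteq> ?A" "mu x \<noteq> ?B" by blast
    then show ?thesis
    proof cases
      case 1
      show ?thesis
      proof (cases "mu ?A = ?B")
        case True then show ?thesis using 1 AB G by (simp add: d)
      next
        case F: False
        have "mu ?A \<noteq> ?A" "mu ?A \<noteq> mu ?B" "mu ?B \<noteq> mu ?A" using G minj AB by auto
        then show ?thesis using 1 AB G F by (simp add: d)
      qed
    next
      case 2
      show ?thesis
      proof (cases "mu ?A = ?B")
        case True
        then have "mu ?B = ?A" using G(1) by metis
        then show ?thesis using 2 AB G True by (simp add: d)
      next
        case F: False
        have "mu ?B \<noteq> ?A" using F G(1) by metis
        have "mu ?B \<noteq> ?B" "mu ?A \<noteq> mu ?B" using G minj AB by auto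
        then show ?thesis using 2 AB G F \<open>mu ?B \<noteq> ?A\<close> by (auto simp: d)
      qed
    next
      case 3
      then have x: "x = mu ?A" using G(1) by metis
      have "mu ?A \<noteq> ?B" using 3 x by simp
      then show ?thesis using 3 x AB G by (auto simp: d)
    next
      case 4
      then have x: "x = mu ?B" using G(1) by metis
      have "mu ?A \<noteq> ?B" using 4 x G(1) by metis
      have "x \<noteq> mu ?A" using 4 x minj AB by auto
      then show ?thesis using 4 x AB G \<open>mu ?A \<noteq> ?B\<close> by (auto simp: d)
    next
      case 5
      have "x \<noteq> mu ?A" "x \<noteq> mu ?B" using 5 G(1) by metis+
      moreover have "mu x \<noteq> mu ?A" "mu x \<noteq> mu ?B" using 5 minj by auto
      ultimately show ?thesis using 5 G by (auto simp: d)
    qed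
  qed
qed

lemma node_T[simp]: "node s (v, True) = (v, 0)" and node_F[simp]: "node s (v, False) = (v, s)"
  by (simp_all add: node_def)

lemma IHc_step:
  assumes g: "good n mu" and IH: "IHc n \<omega> mu" and ab: "a \<noteq> b" "a \<in> {1..n}" "b \<in> {1..n}"
    and l: "fst l = {a, b}"
  shows "IHc n (\<omega> @ [l]) (upd a b (snd l) mu)"
proof -
  define s where "s = length \<omega>"
  define m where "m = snd l"
  let ?A = "(a, False)" and ?B = "(b, False)"
  define mu' where "mu' = upd a b m mu"
  have g': "good n mu'" unfolding mu'_def using upd_good[OF g ab] .
  define G where "G = (Sy (innr n \<omega>))\<^sup>*"
  define S' where "S' = Sy (innr n \<omega>) \<union> Sy (Lset n s l)"
  have G'eq: "(Sy (innr n (\<omega> @ [l])))\<^sup>* = S'\<^sup>*"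
    by (simp add: innr_snoc S'_def Sy_Un s_def)
  have symS': "sym S'" unfolding S'_def Sy_def by (auto simp: sym_def)
  have GS': "(z1, z2) \<in> G \<Longrightarrow> (z1, z2) \<in> S'\<^sup>*" for z1 z2
    unfolding G_def S'_def by (rule rtrancl_mono_Un)
  have Lin: "(z1, z2) \<in> Lset n s l \<Longrightarrow> (z1, z2) \<in> S'\<^sup>*" for z1 z2
    unfolding S'_def Sy_def by (rule r_into_rtrancl) simp
  have IH': "(node s x, node s y) \<in> G \<longleftrightarrow> y = x \<or> y = mu x" if "fst x \<in> {1..n}" "fst y \<in> {1..n}" for x y
    using IH that unfolding IHc_def G_def s_def by blast
  define cls where "cls z = {x. fst x \<in> {1..n} \<and> (node s x, z) \<in> G}" for z
  have C1: "cls (node s y) = {y, mu y}" if y: "fst y \<in> {1..n}" for y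
  proof -
    have iff: "(node s x, node s y) \<in> G \<longleftrightarrow> x = y \<or> x = mu y" if "fst x \<in> {1..n}" for x
    proof -
      have "(node s x, node s y) \<in> G \<longleftrightarrow> (node s y, node s x) \<in> G"
        unfolding G_def using Sy_rt_sym[of "node s x" "node s y"] Sy_rt_sym[of "node s y" "node s x"] by (rule iffI)
      also have "\<dots> \<longleftrightarrow> x = y \<or> x = mu y" using IH'[OF y that] by blast
      finally show ?thesis .
    qed
    have my: "fst (mu y) \<in> {1..n}" using good_fst_mu[OF g y] .
    show ?thesis
    proof (rule set_eqI)
      fix x
      show "x \<in> cls (node s y) \<longleftrightarrow> x \<in> {y, mu y}"
      proof
        assume "x \<in> cls (node s y)"
        then have "fst x \<in> {1..n}" "(node s x, node s y) \<in> G" by (simp_all add: cls_def)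
        then show "x \<in> {y, mu y}" using iff by blast
      next
        assume xin: "x \<in> {y, mu y}"
        then have fx: "fst x \<in> {1..n}" using y my by auto
        then have "(node s x, node s y) \<in> G" using iff[OF fx] xin by blast
        then show "x \<in> cls (node s y)" using fx by (simp add: cls_def)
      qed
    qed
  qed
  have C2: "cls z1 = cls z2" if "(z1, z2) \<in> G" for z1 z2
  proof -
    have "(z2, z1) \<in> G" using that unfolding G_def by (rule Sy_rt_sym)
    show ?thesis
    proof (rule set_eqI)
      fix x
      have "(node s x, z1) \<in> G \<longleftrightarrow> (node s x, z2) \<in> G"
      proof
        assume "(node s x, z1) \<in> G" then show "(node s x, z2) \<in> G"
          using that unfolding G_def by (rule rtrancl_trans)
      next
        assume "(node s x, z2) \<in> G" then show "(node s x, z1) \<in> G"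
          using \<open>(z2, z1) \<in> G\<close> unfolding G_def by (rule rtrancl_trans)
      qed
      then show "x \<in> cls z1 \<longleftrightarrow> x \<in> cls z2" unfolding cls_def by simp
    qed
  qed
  define Phi where "Phi S = \<Union> (nc a b m mu ` S)" for S
  have Phi_pair: "Phi (cls (node s y)) = nc a b m mu y" if "fst y \<in> {1..n}" for y
    using C1[OF that] nc_mu[OF g ab(1)] by (simp add: Phi_def)
  define cn where "cn z = (if snd z = Suc s then {(fst z, False), mu' (fst z, False)} else Phi (cls z))" for z
  have ncO: "nc a b m mu x = {x, mu' x}" if "x \<noteq> ?A" "x \<noteq> ?B" for x
    using that by (simp add: nc_def mu'_def)
  have eLset: "cn z1 = cn z2" if "(z1, z2) \<in> Lset n s l" for z1 z2
  proof -
    have abl: "v \<noteq> w \<and> fst l = {v, w} \<Longrightarrow> (v = a \<and> w = b) \<or> (v = b \<and> w = a)" for v w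
      using l ab(1) by (auto simp: doubleton_eq_iff)
    from that show ?thesis unfolding Lset_def
    proof (elim UnE CollectE exE conjE)
      fix v assume z: "(z1, z2) = ((v, s), (v, Suc s))" and v: "v \<in> {1..n}" "v \<notin> fst l"
      have "cn z1 = Phi (cls (node s (v, False)))" using z by (simp add: cn_def)
      also have "\<dots> = nc a b m mu (v, False)" using Phi_pair[of "(v, False)"] v by simp
      also have "\<dots> = {(v, False), mu' (v, False)}" using ncO v l by auto
      finally show ?thesis using z by (simp add: cn_def)
    next
      fix v w assume z: "(z1, z2) = ((v, s), (w, Suc s))" and c: "snd l" "v \<noteq> w" "fst l = {v, w}"
      have vw: "v \<in> {1..n}" "(v = a \<and> w = b) \<or> (v = b \<and> w = a)" using abl c ab by auto
      have "cn z1 = Phi (cls (node s (v, False)))" using z by (simp add: cn_def)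
      also have "\<dots> = nc a b m mu (v, False)" using Phi_pair[of "(v, False)"] vw by simp
      also have "\<dots> = {(w, False), mu' (w, False)}" using vw c ab(1) by (auto simp: nc_def tr_def mu'_def m_def)
      finally show ?thesis using z by (simp add: cn_def)
    next
      fix v w assume z: "(z1, z2) = ((v, s), (w, s))" and c: "\<not> snd l" "v \<noteq> w" "fst l = {v, w}"
      have vw: "v \<in> {1..n}" "w \<in> {1..n}" "(v = a \<and> w = b) \<or> (v = b \<and> w = a)" using abl c ab by auto
      have "cn z1 = nc a b m mu (v, False)" using z Phi_pair[of "(v, False)"] vw by (simp add: cn_def)
      also have "\<dots> = nc a b m mu (w, False)" using vw c by (auto simp: nc_def m_def)
      also have "\<dots> = cn z2" using z Phi_pair[of "(w, False)"] vw by (simp add: cn_def)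
      finally show ?thesis .
    next
      fix v w assume z: "(z1, z2) = ((v, Suc s), (w, Suc s))" and c: "\<not> snd l" "v \<noteq> w" "fst l = {v, w}"
      have vw: "(v = a \<and> w = b) \<or> (v = b \<and> w = a)" using abl c by auto
      have "mu' ?A = ?B" "mu' ?B = ?A" using c ab(1) by (auto simp: mu'_def m_def upd_def)
      then show ?thesis using z vw by (auto simp: cn_def)
    qed
  qed
  have eS': "cn z1 = cn z2" if e: "(z1, z2) \<in> S'" for z1 z2
  proof -
    consider "(z1, z2) \<in> Sy (innr n \<omega>)" | "(z1, z2) \<in> Lset n s l" | "(z2, z1) \<in> Lset n s l"
      using e unfolding S'_def Sy_def by blast
    then show ?thesis
    proof cases
      case 1
      then have "snd z1 \<le> s" "snd z2 \<le> s" using Sy_innr_nodes s_def by blast+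
      moreover have "(z1, z2) \<in> G" using 1 unfolding G_def by (rule r_into_rtrancl)
      ultimately show ?thesis using C2 by (simp add: cn_def)
    next
      case 2 then show ?thesis by (rule eLset)
    next
      case 3 then show ?thesis using eLset by metis
    qed
  qed
  have eG': "cn z1 = cn z2" if "(z1, z2) \<in> S'\<^sup>*" for z1 z2
    using that by (induction rule: rtrancl_induct) (auto dest: eS')
  have cn_end: "cn (node (Suc s) x) = {x, mu' x}" if x: "fst x \<in> {1..n}" for x
  proof -
    obtain v bb where xe: "x = (v, bb)" by (cases x)
    show ?thesis
    proof (cases bb)
      case True
      have "cn (node (Suc s) x) = Phi (cls (node s x))" using xe True by (simp add: cn_def)
      also have "\<dots> = nc a b m mu x" using Phi_pair[OF x] .
      also have "\<dots> = {x, mu' x}" using ncO xe True by simp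
      finally show ?thesis .
    next
      case False
      then show ?thesis using xe by (simp add: cn_def)
    qed
  qed
  have sym': "(z1, z2) \<in> S'\<^sup>* \<Longrightarrow> (z2, z1) \<in> S'\<^sup>*" for z1 z2 using rtrancl_sym[OF symS'] .
  have L0: "(node s y, node (Suc s) y) \<in> S'\<^sup>*" if yy: "fst y \<in> {1..n}" "y \<noteq> ?A" "y \<noteq> ?B" for y
  proof -
    obtain v bb where ye: "y = (v, bb)" by (cases y)
    show ?thesis
    proof (cases bb)
      case True then show ?thesis using ye by simp
    next
      case False
      have vv: "v \<in> {1..n}" "v \<noteq> a" "v \<noteq> b" using yy ye False by auto
      then have "v \<notin> fst l" using l by auto
      then have "((v, s), (v, Suc s)) \<in> Lset n s l" using vv by (simp add: Lset_def)
      then show ?thesis using Lin ye False by simp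
    qed
  qed
  have Gold: "(node s y, node s (mu y)) \<in> S'\<^sup>*" if "fst y \<in> {1..n}" for y
    using IH'[OF that good_fst_mu[OF g that]] GS' by blast
  have dir2: "(node (Suc s) x, node (Suc s) (mu' x)) \<in> S'\<^sup>*" if x: "fst x \<in> {1..n}" for x
  proof (cases m)
    case True
    let ?t = "tr ?A ?B"
    have mu'c: "mu' y = ?t (mu (?t y))" for y using True by (simp add: mu'_def upd_cross)
    have tD: "fst (?t y) \<in> {1..n}" if "fst y \<in> {1..n}" for y using that ab by (auto simp: tr_def)
    have L1: "(node s (?t y), node (Suc s) y) \<in> S'\<^sup>*" if "fst y \<in> {1..n}" for y
    proof -
      consider "y = ?A" | "y = ?B" | "y \<noteq> ?A" "y \<noteq> ?B" by blast
      then show ?thesis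
      proof cases
        case 1
        have "((b, s), (a, Suc s)) \<in> Lset n s l" using True l ab(1) by (auto simp: Lset_def m_def)
        then show ?thesis using 1 Lin ab(1) by (simp add: tr_def)
      next
        case 2
        have "((a, s), (b, Suc s)) \<in> Lset n s l" using True l ab(1) by (auto simp: Lset_def m_def)
        then show ?thesis using 2 Lin ab(1) by (simp add: tr_def)
      next
        case 3 then show ?thesis using L0[OF that] by (simp add: tr_def)
      qed
    qed
    have c1: "(node (Suc s) x, node s (?t x)) \<in> S'\<^sup>*" using sym'[OF L1[OF x]] .
    have c2: "(node s (?t x), node s (mu (?t x))) \<in> S'\<^sup>*" using Gold[OF tD[OF x]] .
    have c3: "(node s (mu (?t x)), node (Suc s) (?t (mu (?t x)))) \<in> S'\<^sup>*"
      using L1[OF tD[OF good_fst_mu[OF g tD[OF x]]]] by simp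
    show ?thesis unfolding mu'c using rtrancl_trans[OF rtrancl_trans[OF c1 c2] c3] .
  next
    case False
    have f: "mu' y = (if y = ?A then ?B else if y = ?B then ?A
       else if y = mu ?A then mu ?B else if y = mu ?B then mu ?A else mu y)" for y
      using False by (simp add: upd_def mu'_def)
    have eAB: "(node s ?A, node s ?B) \<in> S'\<^sup>*" "(node (Suc s) ?A, node (Suc s) ?B) \<in> S'\<^sup>*"
    proof -
      have "((a, s), (b, s)) \<in> Lset n s l" "((a, Suc s), (b, Suc s)) \<in> Lset n s l"
        using False l ab(1) by (auto simp: Lset_def m_def)
      then show "(node s ?A, node s ?B) \<in> S'\<^sup>*" "(node (Suc s) ?A, node (Suc s) ?B) \<in> S'\<^sup>*"
        using Lin by auto
    qed
    note G1 = goodD(1)[OF g]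
    have minj: "mu y = mu z \<longleftrightarrow> y = z" for y z using good_mu_inj[OF g] by blast
    have fA: "fst ?A \<in> {1..n}" "fst ?B \<in> {1..n}" using ab by auto
    consider "x = ?A" | "x = ?B" | "x \<noteq> ?A" "x \<noteq> ?B" "x = mu ?A"
      | "x \<noteq> ?A" "x \<noteq> ?B" "x \<noteq> mu ?A" "x = mu ?B"
      | "x \<noteq> ?A" "x \<noteq> ?B" "x \<noteq> mu ?A" "x \<noteq> mu ?B" by blast
    then show ?thesis
    proof cases
      case 1 then show ?thesis using eAB by (simp add: f)
    next
      case 2 then show ?thesis using sym'[OF eAB(2)] ab(1) by (simp add: f)
    next
      case 3
      have mB: "mu ?B \<noteq> ?A" "mu ?B \<noteq> ?B" using 3 G1 goodD(2)[OF g] by metis+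
      have c1: "(node (Suc s) x, node s x) \<in> S'\<^sup>*" using sym'[OF L0[OF x 3(1,2)]] .
      have "mu x = ?A" using 3 G1 by metis
      then have c2: "(node s x, node s ?A) \<in> S'\<^sup>*" using Gold[OF x] by simp
      have c4: "(node s ?B, node s (mu ?B)) \<in> S'\<^sup>*" using Gold[OF fA(2)] .
      have c5: "(node s (mu ?B), node (Suc s) (mu ?B)) \<in> S'\<^sup>*"
        using L0[OF good_fst_mu[OF g fA(2)] mB] .
      have "mu' x = mu ?B" using 3 by (simp add: f)
      then show ?thesis using rtrancl_trans[OF rtrancl_trans[OF rtrancl_trans[OF rtrancl_trans[OF c1 c2] eAB(1)] c4] c5] by simp
    next
      case 4
      have mA: "mu ?A \<noteq> ?A" "mu ?A \<noteq> ?B" using 4 G1 goodD(2)[OF g] by metis+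
      have c1: "(node (Suc s) x, node s x) \<in> S'\<^sup>*" using sym'[OF L0[OF x 4(1,2)]] .
      have "mu x = ?B" using 4 G1 by metis
      then have c2: "(node s x, node s ?B) \<in> S'\<^sup>*" using Gold[OF x] by simp
      have c3: "(node s ?B, node s ?A) \<in> S'\<^sup>*" using sym'[OF eAB(1)] .
      have c4: "(node s ?A, node s (mu ?A)) \<in> S'\<^sup>*" using Gold[OF fA(1)] .
      have c5: "(node s (mu ?A), node (Suc s) (mu ?A)) \<in> S'\<^sup>*"
        using L0[OF good_fst_mu[OF g fA(1)] mA] .
      have "mu' x = mu ?A" using 4 by (simp add: f)
      then show ?thesis using rtrancl_trans[OF rtrancl_trans[OF rtrancl_trans[OF rtrancl_trans[OF c1 c2] c3] c4] c5] by simp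
    next
      case 5
      have mx: "mu x \<noteq> ?A" "mu x \<noteq> ?B" using 5 G1 by metis+
      have c1: "(node (Suc s) x, node s x) \<in> S'\<^sup>*" using sym'[OF L0[OF x 5(1,2)]] .
      have c2: "(node s x, node s (mu x)) \<in> S'\<^sup>*" using Gold[OF x] .
      have c3: "(node s (mu x), node (Suc s) (mu x)) \<in> S'\<^sup>*"
        using L0[OF good_fst_mu[OF g x] mx] .
      have "mu' x = mu x" using 5 by (simp add: f)
      then show ?thesis using rtrancl_trans[OF rtrancl_trans[OF c1 c2] c3] by simp
    qed
  qed
  show ?thesis unfolding IHc_def
  proof (intro allI impI)
    fix x y :: "nat \<times> bool" assume x: "fst x \<in> {1..n}" and y: "fst y \<in> {1..n}"
    have len: "length (\<omega> @ [l]) = Suc s" by (simp add: s_def)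
    show "(node (length (\<omega> @ [l])) x, node (length (\<omega> @ [l])) y) \<in> (Sy (innr n (\<omega> @ [l])))\<^sup>*
          \<longleftrightarrow> y = x \<or> y = upd a b (snd l) mu x"
      unfolding len G'eq mu'_def[symmetric, unfolded m_def]
    proof
      assume "(node (Suc s) x, node (Suc s) y) \<in> S'\<^sup>*"
      then have "{x, mu' x} = {y, mu' y}" using eG' cn_end x y by metis
      then show "y = x \<or> y = mu' x" by (auto simp: doubleton_eq_iff)
    next
      assume "y = x \<or> y = mu' x"
      then show "(node (Suc s) x, node (Suc s) y) \<in> S'\<^sup>*" using dir2[OF x] by auto
    qed
  qed
qed

lemma cls_node:
  assumes g: "good n mu" and IH: "IHc n \<omega> mu" and y: "fst y \<in> {1..n}"
  shows "{x. fst x \<in> {1..n} \<and> (node (length \<omega>) x, node (length \<omega>) y) \<in> (Sy (innr n \<omega>))\<^sup>*} = {y, mu y}"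
proof -
  let ?s = "length \<omega>" and ?G = "(Sy (innr n \<omega>))\<^sup>*"
  have IH': "(node ?s x, node ?s y) \<in> ?G \<longleftrightarrow> y = x \<or> y = mu x" if "fst x \<in> {1..n}" "fst y \<in> {1..n}" for x y
    using IH that unfolding IHc_def by blast
  have iff: "(node ?s x, node ?s y) \<in> ?G \<longleftrightarrow> x = y \<or> x = mu y" if x: "fst x \<in> {1..n}" for x
  proof -
    have "(node ?s x, node ?s y) \<in> ?G \<longleftrightarrow> (node ?s y, node ?s x) \<in> ?G"
      using Sy_rt_sym[of "node ?s x" "node ?s y"] Sy_rt_sym[of "node ?s y" "node ?s x"] by (rule iffI)
    also have "\<dots> \<longleftrightarrow> x = y \<or> x = mu y" using IH'[OF y x] by blast
    finally show ?thesis .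
  qed
  have my: "fst (mu y) \<in> {1..n}" using good_fst_mu[OF g y] .
  show ?thesis
  proof (rule set_eqI)
    fix x
    show "x \<in> {x. fst x \<in> {1..n} \<and> (node ?s x, node ?s y) \<in> ?G} \<longleftrightarrow> x \<in> {y, mu y}"
    proof
      assume "x \<in> {x. fst x \<in> {1..n} \<and> (node ?s x, node ?s y) \<in> ?G}"
      then have "fst x \<in> {1..n}" "(node ?s x, node ?s y) \<in> ?G" by simp_all
      then show "x \<in> {y, mu y}" using iff by blast
    next
      assume xin: "x \<in> {y, mu y}"
      then have fx: "fst x \<in> {1..n}" using y my by auto
      then have "(node ?s x, node ?s y) \<in> ?G" using iff[OF fx] xin by blast
      then show "x \<in> {x. fst x \<in> {1..n} \<and> (node ?s x, node ?s y) \<in> ?G}" using fx by simp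
    qed
  qed
qed

definition Kc :: "(nat \<times> bool \<Rightarrow> nat \<times> bool) \<Rightarrow> nat \<times> bool \<Rightarrow> (nat \<times> bool) set" where
  "Kc mu x = {y. (x, y) \<in> (Erel mu)\<^sup>*}"

lemma Kc_eq: assumes g: "good n mu" and xy: "(x, y) \<in> (Erel mu)\<^sup>*" shows "Kc mu x = Kc mu y"
proof -
  have yx: "(y, x) \<in> (Erel mu)\<^sup>*" using Erel_rtrancl_sym[OF g xy] .
  show ?thesis
  proof (rule set_eqI)
    fix z
    have "(x, z) \<in> (Erel mu)\<^sup>* \<longleftrightarrow> (y, z) \<in> (Erel mu)\<^sup>*"
    proof
      assume "(x, z) \<in> (Erel mu)\<^sup>*" then show "(y, z) \<in> (Erel mu)\<^sup>*" using yx by (rule rtrancl_trans[rotated])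
    next
      assume "(y, z) \<in> (Erel mu)\<^sup>*" then show "(x, z) \<in> (Erel mu)\<^sup>*" using xy by (rule rtrancl_trans[rotated])
    qed
    then show "z \<in> Kc mu x \<longleftrightarrow> z \<in> Kc mu y" by (simp add: Kc_def)
  qed
qed

lemma seg_Sy: "seg_adj n \<omega> \<union> (seg_adj n \<omega>)\<inverse> = Sy (Tz n \<omega>) \<union> Sy (innr n \<omega>)"
  by (auto simp: seg_adj_split Sy_def)

lemma same_loop_iff:
  assumes g: "good n mu" and IH: "IHc n \<omega> mu" and v: "v \<in> {1..n}" and w: "w \<in> {1..n}"
  shows "same_loop n \<omega> v w \<longleftrightarrow> ((v, True), (w, True)) \<in> (Erel mu)\<^sup>*"
proof -
  let ?s = "length \<omega>"
  define S where "S = Sy (Tz n \<omega>) \<union> Sy (innr n \<omega>)"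
  have sl: "same_loop n \<omega> v w \<longleftrightarrow> ((v, 0), (w, 0)) \<in> S\<^sup>*"
    unfolding same_loop_def S_def seg_Sy ..
  have GS: "(z1, z2) \<in> (Sy (innr n \<omega>))\<^sup>* \<Longrightarrow> (z1, z2) \<in> S\<^sup>*" for z1 z2
    unfolding S_def using rtrancl_mono_Un[of z1 z2 "Sy (innr n \<omega>)" "Sy (Tz n \<omega>)"] by (simp add: Un_commute)
  have TzS: "((u, ?s), (u, 0)) \<in> S\<^sup>*" "((u, 0), (u, ?s)) \<in> S\<^sup>*" if "u \<in> {1..n}" for u
    using that unfolding S_def Sy_def Tz_def by (auto intro!: r_into_rtrancl)
  have IH': "(node ?s x, node ?s (mu x)) \<in> (Sy (innr n \<omega>))\<^sup>*" if "fst x \<in> {1..n}" for x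
    using IH that good_fst_mu[OF g that] unfolding IHc_def by blast
  show ?thesis
  proof
    assume "same_loop n \<omega> v w"
    then have conn: "((v, 0), (w, 0)) \<in> S\<^sup>*" using sl by simp
    define cls where "cls z = {x. fst x \<in> {1..n} \<and> (node ?s x, z) \<in> (Sy (innr n \<omega>))\<^sup>*}" for z
    define lab where "lab z = \<Union> (Kc mu ` cls z)" for z
    have C1: "cls (node ?s y) = {y, mu y}" if "fst y \<in> {1..n}" for y
      unfolding cls_def using cls_node[OF g IH that] .
    have labn: "lab (node ?s y) = Kc mu y" if "fst y \<in> {1..n}" for y
      using C1[OF that] Kc_eq[OF g Erel_mu[of y mu]] by (simp add: lab_def)
    have C2: "cls z1 = cls z2" if e: "(z1, z2) \<in> Sy (innr n \<omega>)" for z1 z2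
    proof -
      have a: "(z1, z2) \<in> (Sy (innr n \<omega>))\<^sup>*" using e by (rule r_into_rtrancl)
      have b: "(z2, z1) \<in> (Sy (innr n \<omega>))\<^sup>*" using Sy_rt_sym[OF a] .
      show ?thesis
      proof (rule set_eqI)
        fix x
        have "(node ?s x, z1) \<in> (Sy (innr n \<omega>))\<^sup>* \<longleftrightarrow> (node ?s x, z2) \<in> (Sy (innr n \<omega>))\<^sup>*"
        proof
          assume "(node ?s x, z1) \<in> (Sy (innr n \<omega>))\<^sup>*" then show "(node ?s x, z2) \<in> (Sy (innr n \<omega>))\<^sup>*"
            using a by (rule rtrancl_trans)
        next
          assume "(node ?s x, z2) \<in> (Sy (innr n \<omega>))\<^sup>*" then show "(node ?s x, z1) \<in> (Sy (innr n \<omega>))\<^sup>*"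
            using b by (rule rtrancl_trans)
        qed
        then show "x \<in> cls z1 \<longleftrightarrow> x \<in> cls z2" by (simp add: cls_def)
      qed
    qed
    have Tlab: "lab (u, ?s) = lab (u, 0)" if "u \<in> {1..n}" for u
    proof -
      have "lab (u, ?s) = Kc mu (u, False)" using labn[of "(u, False)"] that by simp
      also have "\<dots> = Kc mu (u, True)"
        using Kc_eq[OF g Erel_rho(1)[of "(u, True)" mu]] by (simp add: rho_def)
      also have "\<dots> = lab (u, 0)" using labn[of "(u, True)"] that by simp
      finally show ?thesis .
    qed
    have eS: "lab z1 = lab z2" if e: "(z1, z2) \<in> S" for z1 z2
    proof -
      consider "(z1, z2) \<in> Sy (innr n \<omega>)" | "(z1, z2) \<in> Tz n \<omega>" | "(z2, z1) \<in> Tz n \<omega>"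
        using e unfolding S_def Sy_def by blast
      then show ?thesis
      proof cases
        case 1 then show ?thesis using C2 by (simp add: lab_def)
      next
        case 2 then obtain u where "u \<in> {1..n}" "z1 = (u, ?s)" "z2 = (u, 0)" by (auto simp: Tz_def)
        then show ?thesis using Tlab by simp
      next
        case 3 then obtain u where "u \<in> {1..n}" "z2 = (u, ?s)" "z1 = (u, 0)" by (auto simp: Tz_def)
        then show ?thesis using Tlab by simp
      qed
    qed
    have "lab (v, 0) = lab (w, 0)" using conn by (induction rule: rtrancl_induct) (auto dest: eS)
    then have "Kc mu (v, True) = Kc mu (w, True)" using labn[of "(v, True)"] labn[of "(w, True)"] v w by simp
    then show "((v, True), (w, True)) \<in> (Erel mu)\<^sup>*" by (simp add: Kc_def set_eq_iff)
  next
    assume "((v, True), (w, True)) \<in> (Erel mu)\<^sup>*"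
    moreover have "fst y \<in> {1..n} \<and> ((v, 0), node ?s y) \<in> S\<^sup>*" if "((v, True), y) \<in> (Erel mu)\<^sup>*" for y
      using that
    proof (induction rule: rtrancl_induct)
      case base then show ?case using v by simp
    next
      case (step y z)
      have z: "z = mu y \<or> z = rho y" using step.hyps(2) by (simp add: Erel_iff)
      have fy: "fst y \<in> {1..n}" and c: "((v, 0), node ?s y) \<in> S\<^sup>*" using step.IH by auto
      show ?case
      proof (cases "z = mu y")
        case True
        have "(node ?s y, node ?s z) \<in> S\<^sup>*" using GS[OF IH'[OF fy]] True by simp
        then show ?thesis using rtrancl_trans[OF c] good_fst_mu[OF g fy] True by simp
      next
        case False
        then have zr: "z = rho y" using z by simp
        obtain u bb where ye: "y = (u, bb)" by (cases y)
        have u: "u \<in> {1..n}" using fy ye by simp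
        have "(node ?s y, node ?s z) \<in> S\<^sup>*"
          using zr ye TzS[OF u] by (cases bb) (simp_all add: rho_def node_def)
        then show ?thesis using rtrancl_trans[OF c] fy zr by simp
      qed
    qed
    ultimately have "((v, 0), node ?s (w, True)) \<in> S\<^sup>*" by blast
    then show "same_loop n \<omega> v w" using sl by simp
  qed
qed

fun murev :: "link list \<Rightarrow> nat \<times> bool \<Rightarrow> nat \<times> bool" where
  "murev [] = rho"
| "murev (l # ls) = upd (Min (fst l)) (Max (fst l)) (snd l) (murev ls)"

definition mu_of :: "link list \<Rightarrow> nat \<times> bool \<Rightarrow> nat \<times> bool" where
  "mu_of \<omega> = murev (rev \<omega>)"

lemma mu_of_Nil: "mu_of [] = rho" by (simp add: mu_of_def)
lemma mu_of_snoc: "mu_of (\<omega> @ [l]) = upd (Min (fst l)) (Max (fst l)) (snd l) (mu_of \<omega>)"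
  by (simp add: mu_of_def)

definition wfl :: "nat \<Rightarrow> link list \<Rightarrow> bool" where
  "wfl n \<omega> \<longleftrightarrow> (\<forall>l \<in> set \<omega>. fst l \<in> edges n)"

lemma edge_props:
  assumes "e \<in> edges n"
  shows "Min e \<noteq> Max e" "Min e \<in> {1..n}" "Max e \<in> {1..n}" "e = {Min e, Max e}" "Min e < Max e"
proof -
  obtain i j where ij: "e = {i, j}" "i \<in> {1..n}" "j \<in> {1..n}" "i \<noteq> j"
    using assms by (auto simp: edges_def)
  have mm: "Min e = min i j" "Max e = max i j" using ij by auto
  show "Min e \<noteq> Max e" "Min e \<in> {1..n}" "Max e \<in> {1..n}" "e = {Min e, Max e}" "Min e < Max e"
    using ij mm by (auto simp: min_def max_def)
qed

lemma good_rho: "good n rho" by (simp add: good_def)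

lemma innr_Nil: "innr n [] = {}" by (simp add: innr_def)

lemma IHc_Nil: "IHc n [] rho"
proof -
  have "(node 0 x, node 0 y) \<in> (Sy (innr n []))\<^sup>* \<longleftrightarrow> y = x \<or> y = rho x" for x y :: "nat \<times> bool"
  proof -
    have "(Sy (innr n []))\<^sup>* = Id" by (simp add: innr_Nil Sy_def)
    moreover have "node 0 x = node 0 y \<longleftrightarrow> y = x \<or> y = rho x"
      by (cases x; cases y) (auto simp: node_def rho_def)
    ultimately show ?thesis by simp
  qed
  then show ?thesis by (simp add: IHc_def)
qed

lemma graph_rel_snoc:
  assumes e: "fst l \<in> edges n"
  shows "graph_rel (\<omega> @ [l]) = graph_rel \<omega> \<union> {(Min (fst l), Max (fst l)), (Max (fst l), Min (fst l))}"
proof -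
  note E = edge_props[OF e]
  define a where "a = Min (fst l)"
  define b where "b = Max (fst l)"
  have ab: "a \<noteq> b" "fst l = {a, b}" using E by (simp_all add: a_def b_def)
  have pr: "(i \<noteq> j \<and> {i, j} = fst l) \<longleftrightarrow> (i, j) \<in> {(a, b), (b, a)}" for i j
    using ab by (auto simp: doubleton_eq_iff)
  show ?thesis
  proof (rule set_eqI)
    fix z :: "nat \<times> nat"
    obtain i j where z: "z = (i, j)" by (cases z)
    have "z \<in> graph_rel (\<omega> @ [l]) \<longleftrightarrow> i \<noteq> j \<and> ({i, j} \<in> fst ` set \<omega> \<or> {i, j} = fst l)"
      unfolding graph_rel_def z by auto
    also have "\<dots> \<longleftrightarrow> (i \<noteq> j \<and> {i, j} \<in> fst ` set \<omega>) \<or> (i \<noteq> j \<and> {i, j} = fst l)" by blast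
    also have "\<dots> \<longleftrightarrow> z \<in> graph_rel \<omega> \<union> {(a, b), (b, a)}"
      unfolding pr graph_rel_def z by blast
    finally show "z \<in> graph_rel (\<omega> @ [l]) \<longleftrightarrow> z \<in> graph_rel \<omega> \<union> {(Min (fst l), Max (fst l)), (Max (fst l), Min (fst l))}"
      by (simp add: a_def b_def)
  qed
qed

lemma graph_rel_sym: "sym (graph_rel \<omega>)"
  by (auto simp: graph_rel_def sym_def insert_commute)

lemma main_inv:
  "wfl n \<omega> \<Longrightarrow> good n (mu_of \<omega>) \<and> IHc n \<omega> (mu_of \<omega>) \<and> Inv n (mu_of \<omega>) (graph_rel \<omega>)"
proof (induction \<omega> rule: rev_induct)
  case Nil
  have "Inv n rho (graph_rel [])" by (simp add: Inv_def)
  then show ?case by (simp add: mu_of_Nil good_rho IHc_Nil)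
next
  case (snoc l \<omega>)
  have wf: "wfl n \<omega>" and e: "fst l \<in> edges n" using snoc.prems by (auto simp: wfl_def)
  note E = edge_props[OF e]
  have IH: "good n (mu_of \<omega>)" "IHc n \<omega> (mu_of \<omega>)" "Inv n (mu_of \<omega>) (graph_rel \<omega>)"
    using snoc.IH[OF wf] by auto
  have g': "good n (mu_of (\<omega> @ [l]))" unfolding mu_of_snoc using upd_good[OF IH(1) E(1-3)] .
  have i': "IHc n (\<omega> @ [l]) (mu_of (\<omega> @ [l]))" unfolding mu_of_snoc
    using IHc_step[OF IH(1) IH(2) E(1-3) E(4)] .
  have v': "Inv n (mu_of (\<omega> @ [l])) (graph_rel (\<omega> @ [l]))" unfolding mu_of_snoc graph_rel_snoc[OF e]
    using Inv_upd[OF IH(1) IH(3) E(2,3) graph_rel_sym] .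
  show ?case using g' i' v' by simp
qed

lemma cycle_of_eq:
  assumes "wfl n \<omega>" "v \<in> {1..n}"
  shows "cycle_of n \<omega> v = cyc (mu_of \<omega>) n v"
  using main_inv[OF assms(1)] same_loop_iff[of n "mu_of \<omega>" \<omega> v] assms(2)
  by (auto simp: cycle_of_def cyc_def)

lemma compo_graph: "{w \<in> {1..n}. (v, w) \<in> (graph_rel \<omega>)\<^sup>*} = compo (graph_rel \<omega>) n v"
  by (simp add: compo_def)

lemma VG_VC_bound:
  assumes wf: "wfl n \<omega>"
  shows "card (V_G n \<omega> k - V_C n \<omega> k) \<le> k * card (Cnt (mu_of \<omega>) (graph_rel \<omega>) n k)"
proof -
  let ?C = "Cnt (mu_of \<omega>) (graph_rel \<omega>) n k"
  have sub: "V_G n \<omega> k - V_C n \<omega> k \<subseteq> \<Union> ?C"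
  proof
    fix v assume v: "v \<in> V_G n \<omega> k - V_C n \<omega> k"
    then have vn: "v \<in> {1..n}" and big: "k \<le> card (compo (graph_rel \<omega>) n v)"
      and small: "\<not> k \<le> card (cycle_of n \<omega> v)"
      by (auto simp: V_G_def V_C_def compo_def)
    have ceq: "cycle_of n \<omega> v = cyc (mu_of \<omega>) n v" using cycle_of_eq[OF wf vn] .
    have sm: "card (cyc (mu_of \<omega>) n v) < k" using small ceq by simp
    have ne: "cyc (mu_of \<omega>) n v \<noteq> compo (graph_rel \<omega>) n v" using sm big by auto
    have "cyc (mu_of \<omega>) n v \<in> ?C" using vn sm ne by (auto simp: Cnt_def)
    then show "v \<in> \<Union> ?C" using cyc_self[OF vn] by blast
  qed
  have fU: "finite (\<Union> ?C)" by (rule finite_Union[OF Cnt_fin]) (auto simp: Cnt_def cyc_fin)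
  have "card (V_G n \<omega> k - V_C n \<omega> k) \<le> card (\<Union> ?C)" by (rule card_mono[OF fU sub])
  also have "\<dots> \<le> sum card ?C" by (rule card_Union_le_sum_card)
  also have "\<dots> \<le> sum (\<lambda>_. k) ?C"
    by (rule sum_mono) (auto simp: Cnt_def)
  also have "\<dots> = k * card ?C" by simp
  finally show ?thesis .
qed

lemma Cnt_Nil: "Cnt (mu_of []) (graph_rel []) n k = {}"
proof -
  have "cyc rho n v = compo (graph_rel []) n v" if v: "v \<in> {1..n}" for v
  proof -
    have c: "compo (graph_rel []) n v = {v}" using v by (auto simp: compo_def graph_rel_def)
    have "Inv n rho (graph_rel [])" by (simp add: Inv_def)
    then have "cyc rho n v \<subseteq> {v}" using cyc_sub_comp[OF good_rho _ v] c by blast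
    then show ?thesis using cyc_self[OF v, of rho] c by auto
  qed
  then show ?thesis by (auto simp: Cnt_def mu_of_Nil)
qed

definition badE :: "(nat \<times> bool \<Rightarrow> nat \<times> bool) \<Rightarrow> nat \<Rightarrow> nat set \<Rightarrow> bool" where
  "badE mu k e \<longleftrightarrow> bad mu k (Min e) (Max e) \<and> bad mu k (Max e) (Min e)"

lemma Cnt_step:
  assumes wf: "wfl n \<omega>" and e: "fst l \<in> edges n"
  shows "card (Cnt (mu_of (\<omega> @ [l])) (graph_rel (\<omega> @ [l])) n k)
           \<le> card (Cnt (mu_of \<omega>) (graph_rel \<omega>) n k) + (if badE (mu_of \<omega>) k (fst l) then 2 else 0)"
proof -
  note E = edge_props[OF e]
  have I: "good n (mu_of \<omega>)" "Inv n (mu_of \<omega>) (graph_rel \<omega>)" using main_inv[OF wf] by auto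
  show ?thesis unfolding mu_of_snoc graph_rel_snoc[OF e] badE_def
    using step_count[OF I(1) I(2) graph_rel_sym E(1-3)] .
qed

lemma bad_sub: "{b. bad mu k a b} \<subseteq> (\<lambda>i. fst ((sig mu ^^ i) (a, False))) ` ({..<k} \<union> {per mu (a, False) - k..<per mu (a, False)})"
  unfolding bad_def by auto

lemma bad_fin: "finite {b. bad mu k a b}"
  by (rule finite_subset[OF bad_sub]) simp

lemma bad_count: "card {b. bad mu k a b} \<le> 2 * k"
proof -
  let ?L = "per mu (a, False)"
  have "card {b. bad mu k a b} \<le> card ((\<lambda>i. fst ((sig mu ^^ i) (a, False))) ` ({..<k} \<union> {?L - k..<?L}))"
    by (rule card_mono[OF _ bad_sub]) simp
  also have "\<dots> \<le> card ({..<k} \<union> {?L - k..<?L})" by (rule card_image_le) simp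
  also have "\<dots> \<le> card {..<k} + card {?L - k..<?L}" by (rule card_Un_le)
  also have "\<dots> \<le> 2 * k" by simp
  finally show ?thesis .
qed

lemma edges_alt: "edges n = {B. B \<subseteq> {1..n} \<and> card B = 2}"
proof (rule set_eqI)
  fix B :: "nat set"
  show "B \<in> edges n \<longleftrightarrow> B \<in> {B. B \<subseteq> {1..n} \<and> card B = 2}"
  proof
    assume "B \<in> edges n"
    then obtain i j where "B = {i, j}" "i \<in> {1..n}" "j \<in> {1..n}" "i \<noteq> j" by (auto simp: edges_def)
    then show "B \<in> {B. B \<subseteq> {1..n} \<and> card B = 2}" by auto
  next
    assume "B \<in> {B. B \<subseteq> {1..n} \<and> card B = 2}"
    then obtain x y where "B = {x, y}" "x \<noteq> y" "B \<subseteq> {1..n}" unfolding card_2_iff by blast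
    then show "B \<in> edges n" unfolding edges_def by blast
  qed
qed

lemma card_edges: "2 * card (edges n) = n * (n - 1)"
proof -
  have "card (edges n) = n choose 2" unfolding edges_alt using n_subsets[of "{1..n}" 2] by simp
  moreover have "even (n * (n - 1))" by (cases n) auto
  ultimately show ?thesis by (simp add: choose_two)
qed

lemma badE_count:
  assumes g: "good n mu"
  shows "2 * card {e \<in> edges n. badE mu k e} \<le> n * (2 * k)"
proof -
  define P where "P = {(a, b). a \<in> {1..n} \<and> b \<in> {1..n} \<and> a < b \<and> bad mu k a b \<and> bad mu k b a}"
  define P' where "P' = {(a, b). a \<in> {1..n} \<and> b \<in> {1..n} \<and> b < a \<and> bad mu k a b \<and> bad mu k b a}"
  define Q where "Q = Sigma {1..n} (\<lambda>a. {b. bad mu k a b})"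
  have finP: "finite P" by (rule finite_subset[of _ "{1..n} \<times> {1..n}"]) (auto simp: P_def)
  have finP': "finite P'" by (rule finite_subset[of _ "{1..n} \<times> {1..n}"]) (auto simp: P'_def)
  have c1: "card {e \<in> edges n. badE mu k e} \<le> card P"
  proof -
    have "inj_on (\<lambda>e. (Min e, Max e)) {e \<in> edges n. badE mu k e}"
    proof (rule inj_onI)
      fix e1 e2 assume "e1 \<in> {e \<in> edges n. badE mu k e}" "e2 \<in> {e \<in> edges n. badE mu k e}"
        "(Min e1, Max e1) = (Min e2, Max e2)"
      then have "Min e1 = Min e2" "Max e1 = Max e2" "e1 \<in> edges n" "e2 \<in> edges n" by simp_all
      then show "e1 = e2" using edge_props(4)[of e1 n] edge_props(4)[of e2 n] by simp
    qed
    moreover have "(\<lambda>e. (Min e, Max e)) ` {e \<in> edges n. badE mu k e} \<subseteq> P"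
    proof
      fix z assume "z \<in> (\<lambda>e. (Min e, Max e)) ` {e \<in> edges n. badE mu k e}"
      then obtain e where e: "e \<in> edges n" "badE mu k e" "z = (Min e, Max e)" by blast
      then show "z \<in> P" using edge_props[OF e(1)] e by (auto simp: P_def badE_def)
    qed
    ultimately show ?thesis using card_inj_on_le finP by blast
  qed
  have c2: "card P' = card P"
  proof -
    have "P' = (\<lambda>(a, b). (b, a)) ` P" by (auto simp: P_def P'_def image_iff)
    moreover have "inj_on (\<lambda>(a, b). (b, a)) P" by (auto simp: inj_on_def)
    ultimately show ?thesis by (simp add: card_image)
  qed
  have c3: "card P + card P' \<le> card Q"
  proof -
    have "P \<inter> P' = {}" by (auto simp: P_def P'_def)
    moreover have "P \<union> P' \<subseteq> Q" by (auto simp: P_def P'_def Q_def)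
    moreover have "finite Q" unfolding Q_def by (intro finite_SigmaI) (simp_all add: bad_fin)
    ultimately show ?thesis using card_Un_disjoint[OF finP finP'] card_mono[of Q "P \<union> P'"] by simp
  qed
  have c4: "card Q \<le> n * (2 * k)"
  proof -
    have "card Q = (\<Sum>a\<in>{1..n}. card {b. bad mu k a b})" unfolding Q_def
      by (rule card_SigmaI) (simp_all add: bad_fin)
    also have "\<dots> \<le> (\<Sum>a\<in>{1..n}. 2 * k)" by (rule sum_mono) (rule bad_count)
    finally show ?thesis by simp
  qed
  show ?thesis using c1 c2 c3 c4 by linarith
qed

lemma replicate_pmf_snoc:
  "replicate_pmf (Suc s) p = bind_pmf (replicate_pmf s p) (\<lambda>xs. map_pmf (\<lambda>x. xs @ [x]) p)"
proof (induction s)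
  case 0
  then show ?case by (simp add: map_pmf_def bind_return_pmf)
next
  case (Suc s)
  have "replicate_pmf (Suc (Suc s)) p = bind_pmf p (\<lambda>x. bind_pmf (replicate_pmf (Suc s) p) (\<lambda>xs. return_pmf (x # xs)))"
    by simp
  also have "\<dots> = bind_pmf p (\<lambda>x. bind_pmf (replicate_pmf s p) (\<lambda>xs. map_pmf (\<lambda>y. x # xs @ [y]) p))"
    unfolding Suc by (simp add: bind_assoc_pmf map_pmf_def bind_return_pmf)
  also have "\<dots> = bind_pmf (replicate_pmf (Suc s) p) (\<lambda>xs. map_pmf (\<lambda>x. xs @ [x]) p)"
    by (simp add: bind_assoc_pmf map_pmf_def bind_return_pmf)
  finally show ?case .
qed

lemma edges_fin: "finite (edges n)"
  by (rule finite_subset[of _ "Pow {1..n}"]) (auto simp: edges_def)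

lemma edges_ne: "2 < n \<Longrightarrow> edges n \<noteq> {}"
proof -
  assume "2 < n"
  then have "{1, 2} \<in> edges n" unfolding edges_def by force
  then show ?thesis by blast
qed

lemma set_link_pmf: assumes n: "2 < n" shows "set_pmf (link_pmf n \<nu>) \<subseteq> edges n \<times> UNIV"
  unfolding link_pmf_def by (auto simp: set_pmf_of_set[OF edges_ne[OF n] edges_fin])

lemma fin_link_pmf: "2 < n \<Longrightarrow> finite (set_pmf (link_pmf n \<nu>))"
proof -
  assume "2 < n"
  have "set_pmf (link_pmf n \<nu>) \<subseteq> edges n \<times> UNIV" using set_link_pmf[OF \<open>2 < n\<close>] .
  moreover have "finite (edges n \<times> (UNIV :: bool set))" using edges_fin by simp
  ultimately show ?thesis by (rule finite_subset)
qed

lemma set_rep: "set_pmf (replicate_pmf s p) = {xs. set xs \<subseteq> set_pmf p \<and> length xs = s}"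
  by (auto simp: set_replicate_pmf)

lemma fin_rep: "finite (set_pmf p) \<Longrightarrow> finite (set_pmf (replicate_pmf s p))"
  unfolding set_rep by (rule finite_lists_length_eq)

lemma wfl_rep: "2 < n \<Longrightarrow> \<omega> \<in> set_pmf (replicate_pmf s (link_pmf n \<nu>)) \<Longrightarrow> wfl n \<omega>"
  using set_link_pmf[of n \<nu>] unfolding set_rep wfl_def by auto

lemma prob_bad:
  assumes n: "2 < n" and g: "good n mu"
  shows "measure_pmf.prob (link_pmf n \<nu>) {x. badE mu k (fst x)} \<le> 2 * real k / (real n - 1)"
proof -
  have "measure_pmf.prob (link_pmf n \<nu>) {x. badE mu k (fst x)}
        = measure_pmf.prob (map_pmf fst (link_pmf n \<nu>)) {e. badE mu k e}"
    by (simp add: vimage_def)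
  also have "map_pmf fst (link_pmf n \<nu>) = pmf_of_set (edges n)"
    by (simp add: link_pmf_def map_fst_pair_pmf)
  also have "measure_pmf.prob (pmf_of_set (edges n)) {e. badE mu k e}
      = card (edges n \<inter> {e. badE mu k e}) / card (edges n)"
    using measure_pmf_of_set[OF edges_ne[OF n] edges_fin] by simp
  also have "\<dots> \<le> 2 * real k / (real n - 1)"
  proof -
    have cB: "2 * card {e \<in> edges n. badE mu k e} \<le> n * (2 * k)" using badE_count[OF g] .
    have cE: "2 * card (edges n) = n * (n - 1)" using card_edges .
    have eq: "edges n \<inter> {e. badE mu k e} = {e \<in> edges n. badE mu k e}" by auto
    have pos: "0 < card (edges n)" using edges_ne[OF n] edges_fin card_gt_0_iff by blast
    have n1: "0 < real n - 1" using n by simp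
    have "real (2 * card {e \<in> edges n. badE mu k e}) \<le> real (n * (2 * k))"
      using cB by (simp only: of_nat_le_iff)
    then have r1: "2 * real (card {e \<in> edges n. badE mu k e}) \<le> real n * (2 * real k)" by simp
    have "real (2 * card (edges n)) = real (n * (n - 1))" using cE by (simp only:)
    then have r2: "2 * real (card (edges n)) = real n * (real n - 1)" using n by (simp add: of_nat_diff)
    have "real (card {e \<in> edges n. badE mu k e}) * (real n - 1) \<le> 2 * real k * real (card (edges n))"
    proof -
      have "2 * real (card {e \<in> edges n. badE mu k e}) * (real n - 1) \<le> real n * (2 * real k) * (real n - 1)"
        using r1 n1 by (intro mult_right_mono) auto
      also have "\<dots> = 2 * real k * (2 * real (card (edges n)))" using r2 by simp
      finally show ?thesis by (simp add: mult.commute mult.left_commute)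
    qed
    then show ?thesis unfolding eq using pos n1 by (simp add: field_simps)
  qed
  finally show ?thesis .
qed

definition Yc :: "nat \<Rightarrow> nat \<Rightarrow> link list \<Rightarrow> real" where
  "Yc n k \<omega> = real (card (Cnt (mu_of \<omega>) (graph_rel \<omega>) n k))"

lemma inner_exp:
  assumes n: "2 < n" and wf: "wfl n \<omega>"
  shows "measure_pmf.expectation (link_pmf n \<nu>) (\<lambda>x. Yc n k (\<omega> @ [x])) \<le> Yc n k \<omega> + 4 * real k / (real n - 1)"
proof -
  let ?L = "link_pmf n \<nu>" and ?B = "{x. badE (mu_of \<omega>) k (fst x)}"
  have fin: "finite (set_pmf ?L)" using fin_link_pmf[OF n] .
  have g: "good n (mu_of \<omega>)" using main_inv[OF wf] by auto
  have s1: "measure_pmf.expectation ?L (\<lambda>x. Yc n k (\<omega> @ [x]))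
      \<le> measure_pmf.expectation ?L (\<lambda>x. Yc n k \<omega> + 2 * (indicator ?B x :: real))"
  proof (rule integral_mono_AE)
    show "integrable (measure_pmf ?L) (\<lambda>x. Yc n k (\<omega> @ [x]))" using integrable_measure_pmf_finite[OF fin] .
    show "integrable (measure_pmf ?L) (\<lambda>x. Yc n k \<omega> + 2 * (indicator ?B x :: real))"
      using integrable_measure_pmf_finite[OF fin] .
    show "AE x in measure_pmf ?L. Yc n k (\<omega> @ [x]) \<le> Yc n k \<omega> + 2 * (indicator ?B x :: real)"
      unfolding AE_measure_pmf_iff
    proof
      fix x assume "x \<in> set_pmf ?L"
      then have "x \<in> edges n \<times> UNIV" using set_link_pmf[OF n, where \<nu>=\<nu>] by blast
      then have e: "fst x \<in> edges n" by (auto simp: mem_Times_iff)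
      have "card (Cnt (mu_of (\<omega> @ [x])) (graph_rel (\<omega> @ [x])) n k)
           \<le> card (Cnt (mu_of \<omega>) (graph_rel \<omega>) n k) + (if badE (mu_of \<omega>) k (fst x) then 2 else 0)"
        using Cnt_step[OF wf e] .
      then show "Yc n k (\<omega> @ [x]) \<le> Yc n k \<omega> + 2 * (indicator ?B x :: real)"
        unfolding Yc_def by (cases "badE (mu_of \<omega>) k (fst x)") (simp_all add: indicator_def)
    qed
  qed
  have s2: "measure_pmf.expectation ?L (\<lambda>x. Yc n k \<omega> + 2 * (indicator ?B x :: real))
     = measure_pmf.expectation ?L (\<lambda>x. Yc n k \<omega>) + measure_pmf.expectation ?L (\<lambda>x. 2 * (indicator ?B x :: real))"
    by (rule Bochner_Integration.integral_add) (rule integrable_measure_pmf_finite[OF fin])+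
  have s3: "measure_pmf.expectation ?L (\<lambda>x. Yc n k \<omega>) = Yc n k \<omega>" by simp
  have s4: "measure_pmf.expectation ?L (\<lambda>x. 2 * (indicator ?B x :: real)) = 2 * measure_pmf.prob ?L ?B"
    by simp
  have s5: "measure_pmf.prob ?L ?B \<le> 2 * real k / (real n - 1)" using prob_bad[OF n g, where \<nu>=\<nu> and k=k] by simp
  have s6: "2 * (2 * real k / (real n - 1)) = 4 * real k / (real n - 1)" by simp
  show ?thesis using s1 s2 s3 s4 s5 s6 by linarith
qed

lemma F_step:
  assumes n: "2 < n"
  shows "measure_pmf.expectation (replicate_pmf (Suc s) (link_pmf n \<nu>)) (Yc n k)
      \<le> measure_pmf.expectation (replicate_pmf s (link_pmf n \<nu>)) (Yc n k) + 4 * real k / (real n - 1)"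
proof -
  let ?L = "link_pmf n \<nu>" and ?R = "replicate_pmf s (link_pmf n \<nu>)" and ?c = "4 * real k / (real n - 1)"
  define A where "A = set_pmf ?R"
  have finL: "finite (set_pmf ?L)" using fin_link_pmf[OF n] .
  have finA: "finite A" unfolding A_def using fin_rep[OF finL] .
  have "measure_pmf.expectation (replicate_pmf (Suc s) ?L) (Yc n k)
      = measure_pmf.expectation (bind_pmf ?R (\<lambda>xs. map_pmf (\<lambda>x. xs @ [x]) ?L)) (Yc n k)"
    by (simp only: replicate_pmf_snoc)
  also have "\<dots> = (\<Sum>a\<in>A. pmf ?R a *\<^sub>R measure_pmf.expectation (map_pmf (\<lambda>x. a @ [x]) ?L) (Yc n k))"
    by (rule pmf_expectation_bind) (use finA finL in \<open>auto simp: A_def\<close>)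
  also have "\<dots> = (\<Sum>a\<in>A. pmf ?R a * measure_pmf.expectation ?L (\<lambda>x. Yc n k (a @ [x])))"
    by simp
  also have "\<dots> \<le> (\<Sum>a\<in>A. pmf ?R a * (Yc n k a + ?c))"
  proof (rule sum_mono)
    fix a assume "a \<in> A"
    then have "wfl n a" using wfl_rep[OF n] by (simp add: A_def)
    then show "pmf ?R a * measure_pmf.expectation ?L (\<lambda>x. Yc n k (a @ [x])) \<le> pmf ?R a * (Yc n k a + ?c)"
      using inner_exp[OF n] by (intro mult_left_mono) auto
  qed
  also have "\<dots> = (\<Sum>a\<in>A. pmf ?R a * Yc n k a) + (\<Sum>a\<in>A. pmf ?R a) * ?c"
    by (simp only: distrib_left sum.distrib sum_distrib_right)
  also have "(\<Sum>a\<in>A. pmf ?R a) = 1" using sum_pmf_eq_1[OF finA] by (simp add: A_def)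
  also have "(\<Sum>a\<in>A. pmf ?R a * Yc n k a) = measure_pmf.expectation ?R (Yc n k)"
    by (subst integral_measure_pmf[OF finA]) (auto simp: A_def)
  finally show ?thesis by simp
qed

lemma F_bound:
  assumes n: "2 < n"
  shows "measure_pmf.expectation (replicate_pmf s (link_pmf n \<nu>)) (Yc n k) \<le> real s * (4 * real k / (real n - 1))"
proof (induction s)
  case 0
  show ?case by (simp add: Yc_def Cnt_Nil)
next
  case (Suc s)
  let ?c = "4 * real k / (real n - 1)"
  have "real (Suc s) * ?c = real s * ?c + ?c" by (simp add: ring_distribs add_divide_distrib)
  then show ?case using F_step[OF n, where s=s and \<nu>=\<nu> and k=k] Suc by linarith
qed

theorem lemma2p2:
  fixes n s k :: nat and \<nu> :: real
  assumes "n > 2" and "0 \<le> \<nu>" and "\<nu> < 1"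
  shows "measure_pmf.expectation (links_pmf n \<nu> s) (\<lambda>\<omega>. real (card (V_G n \<omega> k - V_C n \<omega> k)))
           \<le> 4 * real s * real k ^ 2 / (real n - 1)"
proof -
  have n: "2 < n" using assms(1) .
  let ?R = "replicate_pmf s (link_pmf n \<nu>)"
  have fin: "finite (set_pmf ?R)" using fin_rep[OF fin_link_pmf[OF n]] .
  have "measure_pmf.expectation (links_pmf n \<nu> s) (\<lambda>\<omega>. real (card (V_G n \<omega> k - V_C n \<omega> k)))
      \<le> measure_pmf.expectation ?R (\<lambda>\<omega>. real k * Yc n k \<omega>)"
    unfolding links_pmf_def
  proof (rule integral_mono_AE)
    show "integrable (measure_pmf ?R) (\<lambda>\<omega>. real (card (V_G n \<omega> k - V_C n \<omega> k)))"
      using integrable_measure_pmf_finite[OF fin] .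
    show "integrable (measure_pmf ?R) (\<lambda>\<omega>. real k * Yc n k \<omega>)"
      using integrable_measure_pmf_finite[OF fin] .
    show "AE \<omega> in measure_pmf ?R. real (card (V_G n \<omega> k - V_C n \<omega> k)) \<le> real k * Yc n k \<omega>"
      unfolding AE_measure_pmf_iff
    proof
      fix \<omega> assume "\<omega> \<in> set_pmf ?R"
      then have "wfl n \<omega>" using wfl_rep[OF n] by simp
      then have "card (V_G n \<omega> k - V_C n \<omega> k) \<le> k * card (Cnt (mu_of \<omega>) (graph_rel \<omega>) n k)"
        by (rule VG_VC_bound)
      then show "real (card (V_G n \<omega> k - V_C n \<omega> k)) \<le> real k * Yc n k \<omega>"
        unfolding Yc_def by (metis of_nat_le_iff of_nat_mult)
    qed
  qed
  also have "\<dots> = real k * measure_pmf.expectation ?R (Yc n k)" by simp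
  also have "\<dots> \<le> real k * (real s * (4 * real k / (real n - 1)))"
    using F_bound[OF n, where s=s and \<nu>=\<nu> and k=k] by (intro mult_left_mono) auto
  also have "\<dots> = 4 * real s * real k ^ 2 / (real n - 1)" by (simp add: power2_eq_square)
  finally show ?thesis .
qed

end
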